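(* Assume $\omega_a\ne0$ and $\omega_{-b}\ne0$, and let $G_k:=\sum_{\ell=0}^kF_{k,\ell}$ for $k\ge0$. Then $$\sum_{k\ge0}G_kz^k=\frac{\widetilde N(1,z)}{\widetilde D(z)D(z)},$$ where $\widetilde D(z)D(z)$ is a polynomial with constant term $1$ and degree $\binom{a+b+1}{a}$; consequently $(G_k)_{k\ge0}$ satisfies a linear recurrence with constant coefficients of order $\binom{a+b+1}{a}$. Moreover, whenever $F_{k+1}\ne0$, $\sum_{\ell=0}^{k}[(1-A_k)^{-1}]_{0,\ell}=G_k/F_{k+1}$.
   Context: Let $S$ be a finite set of integers with $a:=\max S\ge 1$ and $b:=-\min S\ge 1$. Each $s\in S$ carries a weight $\omega_s$ in a field $K$ of characteristic $0$; set $\omega_s:=0$ for $s\in\mathbb Z\setminus S$, and for $s\in\mathbb Z$ put $\beta_s:=\delta_{s,0}-\omega_s$ and $\widetilde\beta_s:=-\beta_{s+1}$. For $k\ge0$, $A_k$ is the $(k+1)\times(k+1)$ matrix with rows and columns indexed by $0,\dots,k$ whose $(i,j)$ entry is $\omega_{j-i}$; $F_k:=\det(1-A_{k-1})$ for $k\ge1$, $F_0:=1$. The entry $[(1-A_k)^{-1}]_{0,\ell}$ is, for formal weights, the weighted generating function of meanders with steps in $S$ staying in $[0,k]$ and ending at $\ell$, and $\sum_\ell$ of these is the generating function $M_k$ of meanders of height at most $k$. For $0\le\ell\le k$, $F_{k,\ell}$ is the $(\ell,0)$ cofactor of $1-A_k$, i.e. $(-1)^\ell$ times the determinant of the matrix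 obtained from $1-A_k$ by deleting row $\ell$ and column $0$. Notation: $[m,n]:=\{i\in\mathbb Z: m\le i\le n\}$, $X+c:=\{x+c:x\in X\}$; an $n$-subset is a subset of cardinality $n$. $I_0:=[0,a-1]$, $\widetilde I_0:=[0,a-2]$ (empty if $a=1$). For a finite set $I\subseteq\mathbb Z$ and $s\in\mathbb Z$, $\epsilon_s(I):=(-1)^{\#\{i\in I:\ i<s\}}$. $\mathbf T$ is the square matrix with rows and columns indexed by the $a$-subsets of $[-b,a-1]$ and entries $\mathbf T[I,J]:=\epsilon_s(I)\beta_s$ if there is an integer $s$ with $I\cup\{a\}=(J+1)\cup\{s\}$, and $0$ otherwise. $\widetilde{\mathbf T}$ is the square matrix indexed by the $(a-1)$-subsets of $[-b-1,a-2]$ with $\widetilde{\mathbf T}[I,J]:=\epsilon_s(I)\widetilde\beta_s$ if there is an integer $s$ with $I\cup\{a-1\}=(J+1)\cup\{s\}$, and $0$ otherwise. $\mathbf U$ has rows indexed by the $(a-1)$-subsets of $[-b-1,a-2]$, columns by the $a$-subsets of $[-b,a-1]$, and $\mathbf U[I,J]=1$ if $I\cup\{a-1\}=J$, $0$ otherwise. $D(z):=\det(1-z\mathbf T)$, $\widetilde D(z):=\det(1-z\widetilde{\mathbf T})$, and $\widetilde N(u,z)$ is the $(\widetilde I_0,I_0)$ entry of $\operatorname{adj}(1-uz\widetilde{\mathbf T})\,\mathbf U\,\operatorname{adj}(1-z\mathbf T)$, adj denoting the adjugate. *)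

theory Defs
  imports "HOL-Combinatorics.Permutations"
          "HOL-Computational_Algebra.Polynomial"
          "HOL-Computational_Algebra.Formal_Power_Series"
          "HOL-Computational_Algebra.Polynomial_FPS"
begin

text \<open>A square matrix over a finite index set I is a function M :: 'i => 'i => 'r
  (only the entries with both indices in I matter).\<close>

definition det_on :: "'i set \<Rightarrow> ('i \<Rightarrow> 'i \<Rightarrow> 'r::comm_ring_1) \<Rightarrow> 'r" where
  "det_on I M = (\<Sum>p \<in> {p. p permutes I}. of_int (sign p) * (\<Prod>i\<in>I. M i (p i)))"

text \<open>Adjugate: adj(M)[i,j] is the (j,i) cofactor, i.e. the determinant of M with
  row j replaced by the i-th unit row.\<close>
definition adj_on :: "'i set \<Rightarrow> ('i \<Rightarrow> 'i \<Rightarrow> 'r::comm_ring_1) \<Rightarrow> 'i \<Rightarrow> 'i \<Rightarrow> 'r" where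
  "adj_on I M i j = det_on I (\<lambda>r c. if r = j then (if c = i then 1 else 0) else M r c)"

text \<open>Matrix inverse on index set I (meaningful when M is invertible).\<close>
definition inv_on :: "'i set \<Rightarrow> ('i \<Rightarrow> 'i \<Rightarrow> 'r::comm_ring_1) \<Rightarrow> 'i \<Rightarrow> 'i \<Rightarrow> 'r" where
  "inv_on I M = (SOME B.
      (\<forall>i\<in>I. \<forall>j\<in>I. (\<Sum>k\<in>I. M i k * B k j) = (if i = j then 1 else 0)) \<and>
      (\<forall>i\<in>I. \<forall>j\<in>I. (\<Sum>k\<in>I. B i k * M k j) = (if i = j then 1 else 0)))"

definition betaw :: "(int \<Rightarrow> 'a::field) \<Rightarrow> int \<Rightarrow> 'a" where
  "betaw \<omega> s = (if s = 0 then 1 else 0) - \<omega> s"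

definition betat :: "(int \<Rightarrow> 'a::field) \<Rightarrow> int \<Rightarrow> 'a" where
  "betat \<omega> s = - betaw \<omega> (s + 1)"

definition Amat :: "(int \<Rightarrow> 'a::field) \<Rightarrow> nat \<Rightarrow> nat \<Rightarrow> 'a" where
  "Amat \<omega> i j = \<omega> (int j - int i)"

text \<open>Entries of 1 - A_k (the index set {0..k} determines k).\<close>
definition IAmat :: "(int \<Rightarrow> 'a::field) \<Rightarrow> nat \<Rightarrow> nat \<Rightarrow> 'a" where
  "IAmat \<omega> i j = (if i = j then 1 else 0) - Amat \<omega> i j"

definition Fdet :: "(int \<Rightarrow> 'a::field) \<Rightarrow> nat \<Rightarrow> 'a" where
  "Fdet \<omega> k = (if k = 0 then 1 else det_on {0..k-1} (IAmat \<omega>))"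

text \<open>F_(k,l): (-1)^l times the determinant of 1 - A_k with row l and column 0 deleted
  (remaining rows/columns renumbered 0..k-1 in increasing order).\<close>
definition Fcof :: "(int \<Rightarrow> 'a::field) \<Rightarrow> nat \<Rightarrow> nat \<Rightarrow> 'a" where
  "Fcof \<omega> k l = (-1) ^ l *
     det_on {0..<k} (\<lambda>i j. IAmat \<omega> (if i < l then i else Suc i) (Suc j))"

definition Gseq :: "(int \<Rightarrow> 'a::field) \<Rightarrow> nat \<Rightarrow> 'a" where
  "Gseq \<omega> k = (\<Sum>l = 0..k. Fcof \<omega> k l)"

definition eps :: "int \<Rightarrow> int set \<Rightarrow> 'a::comm_ring_1" where
  "eps s I = (-1) ^ card {i\<in>I. i < s}"

definition shift1 :: "int set \<Rightarrow> int set" where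
  "shift1 J = (\<lambda>x. x + 1) ` J"

text \<open>The matrix T (a = max S), indexed by a-subsets of [-b, a-1].\<close>
definition Tmat :: "(int \<Rightarrow> 'a::field) \<Rightarrow> int \<Rightarrow> int set \<Rightarrow> int set \<Rightarrow> 'a" where
  "Tmat \<omega> a I J =
     (if \<exists>s. I \<union> {a} = shift1 J \<union> {s}
      then (let s = (THE s. I \<union> {a} = shift1 J \<union> {s}) in eps s I * betaw \<omega> s)
      else 0)"

definition Ttmat :: "(int \<Rightarrow> 'a::field) \<Rightarrow> int \<Rightarrow> int set \<Rightarrow> int set \<Rightarrow> 'a" where
  "Ttmat \<omega> a I J =
     (if \<exists>s. I \<union> {a - 1} = shift1 J \<union> {s}
      then (let s = (THE s. I \<union> {a - 1} = shift1 J \<union> {s}) in eps s I * betat \<omega> s)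
      else 0)"

definition Umat :: "int \<Rightarrow> int set \<Rightarrow> int set \<Rightarrow> 'a::comm_ring_1" where
  "Umat a I J = (if I \<union> {a - 1} = J then 1 else 0)"

definition idxT :: "int \<Rightarrow> int \<Rightarrow> int set set" where
  "idxT a b = {I. I \<subseteq> {-b..a-1} \<and> card I = nat a}"

definition idxTt :: "int \<Rightarrow> int \<Rightarrow> int set set" where
  "idxTt a b = {I. I \<subseteq> {-b-1..a-2} \<and> card I = nat (a - 1)}"

definition zTmat :: "(int \<Rightarrow> 'a::field) \<Rightarrow> int \<Rightarrow> int set \<Rightarrow> int set \<Rightarrow> 'a poly" where
  "zTmat \<omega> a I J = (if I = J then 1 else 0) - [:0, Tmat \<omega> a I J:]"

definition zTtmat :: "(int \<Rightarrow> 'a::field) \<Rightarrow> int \<Rightarrow> int set \<Rightarrow> int set \<Rightarrow> 'a poly" where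
  "zTtmat \<omega> a I J = (if I = J then 1 else 0) - [:0, Ttmat \<omega> a I J:]"

definition Dpoly :: "(int \<Rightarrow> 'a::field) \<Rightarrow> int \<Rightarrow> int \<Rightarrow> 'a poly" where
  "Dpoly \<omega> a b = det_on (idxT a b) (zTmat \<omega> a)"

definition Dtpoly :: "(int \<Rightarrow> 'a::field) \<Rightarrow> int \<Rightarrow> int \<Rightarrow> 'a poly" where
  "Dtpoly \<omega> a b = det_on (idxTt a b) (zTtmat \<omega> a)"

definition Nt1poly :: "(int \<Rightarrow> 'a::field) \<Rightarrow> int \<Rightarrow> int \<Rightarrow> 'a poly" where
  "Nt1poly \<omega> a b =
     (\<Sum>K\<in>idxTt a b. \<Sum>L\<in>idxT a b.
        adj_on (idxTt a b) (zTtmat \<omega> a) {0..a-2} K * Umat a K L *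
        adj_on (idxT a b) (zTmat \<omega> a) L {0..a-1})"

end

theory Submission
  imports Defs "Jordan_Normal_Form.Determinant"
begin


lemma det_on_cong:
  assumes "\<And>i j. i \<in> A \<Longrightarrow> j \<in> A \<Longrightarrow> M i j = N i j"
  shows "det_on A M = det_on A N"
  unfolding det_on_def
  by (intro sum.cong refl arg_cong2[where f = "(*)"] prod.cong) (auto simp: permutes_in_image assms)

lemma det_on_bij:
  fixes M :: "'j \<Rightarrow> 'j \<Rightarrow> 'r::comm_ring_1"
  assumes f: "bij_betw f A B" and fin: "finite A"
  shows "det_on B M = det_on A (\<lambda>i j. M (f i) (f j))"
proof -
  define g where "g = inv_into A f"
  have bg: "bij_betw g B A" unfolding g_def using f by (rule bij_betw_inv_into)
  have gf: "\<And>x. x \<in> A \<Longrightarrow> g (f x) = x" unfolding g_def using f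
    by (simp add: bij_betw_inv_into_left)
  have fg: "\<And>y. y \<in> B \<Longrightarrow> f (g y) = y" unfolding g_def using f
    by (simp add: bij_betw_inv_into_right)
  have finB: "finite B" using f fin bij_betw_finite by blast
  have injf: "inj_on f A" using f by (auto simp: bij_betw_def)
  have w1: "map_permutation A f (map_permutation B g q) = q" if q: "q \<in> {q. q permutes B}" for q
    by (rule map_permutation_compose_inv[OF bg]) (use q fg in auto)
  have w2: "map_permutation B g q \<in> {p. p permutes A}" if q: "q \<in> {q. q permutes B}" for q
    using map_permutation_permutes[OF bg] q by auto
  have w3: "map_permutation B g (map_permutation A f p) = p" if p: "p \<in> {p. p permutes A}" for p
    by (rule map_permutation_compose_inv[OF f]) (use p gf in auto)
  have w4: "map_permutation A f p \<in> {q. q permutes B}" if p: "p \<in> {p. p permutes A}" for p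
    using map_permutation_permutes[OF f] p by auto
  have w5: "of_int (sign (map_permutation A f p)) * (\<Prod>y\<in>B. M y (map_permutation A f p y)) =
        of_int (sign p) * (\<Prod>i\<in>A. M (f i) (f (p i)))" if p: "p \<in> {p. p permutes A}" for p
  proof -
    have s: "sign (map_permutation A f p) = sign p"
      by (rule sign_map_permutation) (use p injf fin in auto)
    have "(\<Prod>y\<in>B. M y (map_permutation A f p y)) = (\<Prod>x\<in>A. M (f x) (map_permutation A f p (f x)))"
      by (rule prod.reindex_bij_betw[OF f, symmetric])
    also have "\<dots> = (\<Prod>x\<in>A. M (f x) (f (p x)))"
      by (rule prod.cong) (auto simp: map_permutation_apply[OF injf])
    finally show ?thesis using s by simp
  qed
  have "(\<Sum>p\<in>{p. p permutes A}. of_int (sign p) * (\<Prod>i\<in>A. M (f i) (f (p i))))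
      = (\<Sum>q\<in>{q. q permutes B}. of_int (sign q) * (\<Prod>y\<in>B. M y (q y)))"
    by (rule sum.reindex_bij_witness[where i = "map_permutation B g" and j = "map_permutation A f"])
       (fact w3, fact w4, fact w1, fact w2, fact w5)
  thus ?thesis unfolding det_on_def by simp
qed

lemma det_on_jnf: "det_on {0..<n} M = det (mat n n (\<lambda>(i,j). M i j))"
  unfolding det_on_def det_def
  by (auto intro!: sum.cong prod.cong simp: permutes_in_image atLeast0LessThan)

lemma adj_on_jnf:
  assumes "i < n" "j < n"
  shows "adj_on {0..<n} M i j = cofactor (mat n n (\<lambda>(i,j). M i j)) j i"
proof -
  define A where "A = mat n n (\<lambda>(i,j). M i j)"
  define B where "B = mat n n (\<lambda>(r,c). if r = j then (if c = i then 1 else 0) else M r c)"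
  have "adj_on {0..<n} M i j = det B" unfolding adj_on_def det_on_jnf B_def ..
  also have "\<dots> = (\<Sum>c<n. B $$ (j,c) * cofactor B j c)"
    by (rule laplace_expansion_row) (use assms in \<open>auto simp: B_def\<close>)
  also have "\<dots> = (\<Sum>c<n. (if c = i then cofactor B j c else 0))"
    by (rule sum.cong) (use assms in \<open>auto simp: B_def\<close>)
  also have "\<dots> = cofactor B j i" using assms by simp
  also have "mat_delete B j i = mat_delete A j i"
    by (rule eq_matI) (auto simp: mat_delete_def A_def B_def)
  hence "cofactor B j i = cofactor A j i" unfolding cofactor_def by simp
  finally show ?thesis unfolding A_def .
qed

lemma adj_on_bij:
  fixes M :: "'j \<Rightarrow> 'j \<Rightarrow> 'r::comm_ring_1"
  assumes f: "bij_betw f A B" and fin: "finite A" and i: "i \<in> A" and j: "j \<in> A"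
  shows "adj_on B M (f i) (f j) = adj_on A (\<lambda>i j. M (f i) (f j)) i j"
proof -
  have injf: "inj_on f A" using f by (auto simp: bij_betw_def)
  show ?thesis unfolding adj_on_def
    by (subst det_on_bij[OF f fin]) (rule det_on_cong, use injf i j in \<open>auto simp: inj_on_eq_iff\<close>)
qed

lemma adj_on_identities:
  fixes M :: "'j \<Rightarrow> 'j \<Rightarrow> 'r::comm_ring_1"
  assumes fin: "finite I" and i: "i \<in> I" and j: "j \<in> I"
  shows "(\<Sum>k\<in>I. M i k * adj_on I M k j) = (if i = j then det_on I M else 0)"
    and "(\<Sum>k\<in>I. adj_on I M i k * M k j) = (if i = j then det_on I M else 0)"
proof -
  define n where "n = card I"
  obtain f where f: "bij_betw f {0..<n} I"
    using ex_bij_betw_nat_finite[OF fin] n_def atLeast0LessThan by metis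
  define N where "N = (\<lambda>r c. M (f r) (f c))"
  define A where "A = mat n n (\<lambda>(r,c). N r c)"
  have AC: "A \<in> carrier_mat n n" unfolding A_def by simp
  define g where "g = inv_into {0..<n} f"
  have gI: "\<And>x. x \<in> I \<Longrightarrow> g x < n" unfolding g_def using f
    by (metis atLeastLessThan_iff bij_betw_imp_surj_on inv_into_into)
  have fg: "\<And>y. y \<in> I \<Longrightarrow> f (g y) = y" unfolding g_def using f
    by (simp add: bij_betw_inv_into_right)
  have detI: "det_on I M = det A" unfolding A_def N_def det_on_jnf[symmetric]
    by (rule det_on_bij[OF f]) simp
  have adjI: "adj_on I M (f r) (f c) = cofactor A c r" if "r < n" "c < n" for r c
    using adj_on_bij[OF f, of r c M] adj_on_jnf[of r n c N] that unfolding A_def N_def by simp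
  have reidx: "(\<Sum>k\<in>I. h k) = (\<Sum>k<n. h (f k))" for h :: "'j \<Rightarrow> 'r"
    using sum.reindex_bij_betw[OF f, of h] by (simp add: atLeast0LessThan)
  have ij: "i = f (g i)" "j = f (g j)" "g i < n" "g j < n" using fg gI i j by auto
  have injg: "g i = g j \<longleftrightarrow> i = j" using ij by metis
  have "(\<Sum>k\<in>I. M i k * adj_on I M k j) = (\<Sum>k<n. A $$ (g i, k) * adj_mat A $$ (k, g j))"
    unfolding reidx
  proof (rule sum.cong)
    fix k assume "k \<in> {..<n}"
    thus "M i (f k) * adj_on I M (f k) j = A $$ (g i, k) * adj_mat A $$ (k, g j)"
      using adjI[of k "g j"] ij by (auto simp: A_def N_def adj_mat_def)
  qed simp
  also have "\<dots> = (A * adj_mat A) $$ (g i, g j)"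
    using ij AC adj_mat(1)[OF AC] by (auto simp: times_mat_def scalar_prod_def atLeast0LessThan intro!: sum.cong)
  also have "\<dots> = (if i = j then det_on I M else 0)"
    using adj_mat(2)[OF AC] ij injg detI by simp
  finally show "(\<Sum>k\<in>I. M i k * adj_on I M k j) = (if i = j then det_on I M else 0)" .
  have "(\<Sum>k\<in>I. adj_on I M i k * M k j) = (\<Sum>k<n. adj_mat A $$ (g i, k) * A $$ (k, g j))"
    unfolding reidx
  proof (rule sum.cong)
    fix k assume "k \<in> {..<n}"
    thus "adj_on I M i (f k) * M (f k) j = adj_mat A $$ (g i, k) * A $$ (k, g j)"
      using adjI[of "g i" k] ij by (auto simp: A_def N_def adj_mat_def)
  qed simp
  also have "\<dots> = (adj_mat A * A) $$ (g i, g j)"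
    using ij AC adj_mat(1)[OF AC] by (auto simp: times_mat_def scalar_prod_def atLeast0LessThan intro!: sum.cong)
  also have "\<dots> = (if i = j then det_on I M else 0)"
    using adj_mat(3)[OF AC] ij injg detI by simp
  finally show "(\<Sum>k\<in>I. adj_on I M i k * M k j) = (if i = j then det_on I M else 0)" .
qed



fun ldet :: "('c::linorder \<Rightarrow> 'r::comm_ring_1) list \<Rightarrow> 'c set \<Rightarrow> 'r" where
  "ldet [] C = (if C = {} then 1 else 0)"
| "ldet (f # fs) C = (\<Sum>c\<in>C. (-1) ^ card {x\<in>C. x < c} * f c * ldet fs (C - {c}))"

lemma ldet_len: "finite C \<Longrightarrow> card C \<noteq> length fs \<Longrightarrow> ldet fs C = 0"
proof (induction fs arbitrary: C)
  case Nil thus ?case by auto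
next
  case (Cons f fs)
  have "ldet fs (C - {c}) = 0" if "c \<in> C" for c
  proof -
    have "card C > 0" using that Cons.prems(1) card_gt_0_iff by blast
    thus ?thesis using Cons.prems that by (intro Cons.IH) (auto simp: card_Diff_singleton)
  qed
  thus ?case by simp
qed

lemma ldet_zero_col:
  "finite C \<Longrightarrow> c \<in> C \<Longrightarrow> (\<forall>g\<in>set fs. g c = 0) \<Longrightarrow> ldet fs C = 0"
proof (induction fs arbitrary: C)
  case Nil thus ?case by auto
next
  case (Cons f fs)
  have "(-1) ^ card {x\<in>C. x < c'} * f c' * ldet fs (C - {c'}) = 0" if "c' \<in> C" for c'
  proof (cases "c' = c")
    case True thus ?thesis using Cons.prems by simp
  next
    case False thus ?thesis using Cons.prems by (subst Cons.IH) auto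
  qed
  thus ?case by simp
qed

lemma ldet_zero_row:
  "finite C \<Longrightarrow> g \<in> set fs \<Longrightarrow> (\<forall>x\<in>C. g x = 0) \<Longrightarrow> ldet fs C = 0"
proof (induction fs arbitrary: C)
  case Nil thus ?case by auto
next
  case (Cons f fs)
  show ?case
  proof (cases "g = f")
    case True thus ?thesis using Cons.prems by simp
  next
    case False
    hence "ldet fs (C - {c}) = 0" if "c \<in> C" for c
      using Cons.prems by (intro Cons.IH) auto
    thus ?thesis by simp
  qed
qed

lemma ldet_neg:
  "ldet (map (\<lambda>i c. - g i c) xs @ rest) C = (-1) ^ length xs * ldet (map g xs @ rest) C"
proof (induction xs arbitrary: C)
  case Nil thus ?case by simp
next
  case (Cons x xs)
  show ?case by (simp add: Cons.IH sum_distrib_left mult_ac)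
qed

lemma ldet_mono:
  assumes "strict_mono_on C h" "finite C"
  shows "ldet fs (h ` C) = ldet (map (\<lambda>f. f \<circ> h) fs) C"
  using assms
proof (induction fs arbitrary: C)
  case Nil thus ?case by simp
next
  case (Cons f fs)
  have inj: "inj_on h C" using Cons.prems strict_mono_on_imp_inj_on by blast
  have lt: "\<And>x y. x \<in> C \<Longrightarrow> y \<in> C \<Longrightarrow> h x < h y \<longleftrightarrow> x < y"
    using Cons.prems(1) strict_mono_on_less by blast
  have "ldet (f # fs) (h ` C) = (\<Sum>c\<in>C. (-1) ^ card {x\<in>h ` C. x < h c} * f (h c) * ldet fs (h ` C - {h c}))"
    by (simp add: sum.reindex[OF inj])
  also have "\<dots> = (\<Sum>c\<in>C. (-1) ^ card {x\<in>C. x < c} * (f \<circ> h) c * ldet (map (\<lambda>f. f \<circ> h) fs) (C - {c}))"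
  proof (rule sum.cong[OF refl])
    fix c assume c: "c \<in> C"
    have e1: "{x\<in>h ` C. x < h c} = h ` {x\<in>C. x < c}" using lt c by auto
    have "card {x\<in>h ` C. x < h c} = card {x\<in>C. x < c}"
      unfolding e1 by (rule card_image) (rule inj_on_subset[OF inj], auto)
    moreover have "h ` C - {h c} = h ` (C - {c})" using inj c by (auto simp: inj_on_def)
    moreover have "ldet fs (h ` (C - {c})) = ldet (map (\<lambda>f. f \<circ> h) fs) (C - {c})"
      using Cons.prems by (intro Cons.IH) (auto intro: monotone_on_subset)
    ultimately show "(-1) ^ card {x\<in>h ` C. x < h c} * f (h c) * ldet fs (h ` C - {h c}) =
      (-1) ^ card {x\<in>C. x < c} * (f \<circ> h) c * ldet (map (\<lambda>f. f \<circ> h) fs) (C - {c})" by simp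
  qed
  finally show ?case by (simp only: list.map ldet.simps)
qed

lemma ldet_det_upt:
  "length fs = m \<Longrightarrow> ldet fs {0..<m} = det (mat m m (\<lambda>(i,j). (fs ! i) j))"
proof (induction m arbitrary: fs)
  case 0 thus ?case by (simp add: det_def)
next
  case (Suc m)
  then obtain f gs where fs: "fs = f # gs" and lg: "length gs = m" by (cases fs) auto
  define A where "A = mat (Suc m) (Suc m) (\<lambda>(i,j). (fs ! i) j)"
  have AC: "A \<in> carrier_mat (Suc m) (Suc m)" unfolding A_def by simp
  define h where "h = (\<lambda>c j::nat. if j < c then j else Suc j)"
  have hm: "strict_mono_on {0..<m} (h c)" for c
    unfolding h_def by (auto simp: strict_mono_on_def)
  have himg: "h c ` {0..<m} = {0..<Suc m} - {c}" if "c < Suc m" for c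
  proof
    show "h c ` {0..<m} \<subseteq> {0..<Suc m} - {c}" unfolding h_def by auto
    show "{0..<Suc m} - {c} \<subseteq> h c ` {0..<m}"
    proof
      fix x assume x: "x \<in> {0..<Suc m} - {c}"
      show "x \<in> h c ` {0..<m}"
      proof (cases "x < c")
        case True thus ?thesis using x that unfolding h_def by (intro image_eqI[of _ _ x]) auto
      next
        case False thus ?thesis using x unfolding h_def by (intro image_eqI[of _ _ "x - 1"]) auto
      qed
    qed
  qed
  have card_lt: "card {x\<in>{0..<Suc m}. x < c} = c" if "c < Suc m" for c
  proof -
    have "{x\<in>{0..<Suc m}. x < c} = {0..<c}" using that by auto
    thus ?thesis by simp
  qed
  have "ldet fs {0..<Suc m} = (\<Sum>c\<in>{0..<Suc m}. (-1) ^ c * f c * ldet gs ({0..<Suc m} - {c}))"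
    unfolding fs ldet.simps by (intro sum.cong refl) (use card_lt in auto)
  also have "\<dots> = (\<Sum>c<Suc m. A $$ (0,c) * cofactor A 0 c)"
  proof (rule sum.cong)
    fix c assume c: "c \<in> {..<Suc m}"
    have "ldet gs ({0..<Suc m} - {c}) = ldet (map (\<lambda>f. f \<circ> h c) gs) {0..<m}"
      using himg[of c] c ldet_mono[OF hm[of c], of gs] by simp
    also have "\<dots> = det (mat m m (\<lambda>(i,j). (map (\<lambda>f. f \<circ> h c) gs ! i) j))"
      by (rule Suc.IH) (simp add: lg)
    also have "mat m m (\<lambda>(i,j). (map (\<lambda>f. f \<circ> h c) gs ! i) j) = mat_delete A 0 c"
      by (rule eq_matI) (auto simp: mat_delete_def A_def fs h_def lg)
    finally show "(-1) ^ c * f c * ldet gs ({0..<Suc m} - {c}) = A $$ (0,c) * cofactor A 0 c"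
      using c by (simp add: cofactor_def A_def fs)
  qed auto
  also have "\<dots> = det A" by (rule laplace_expansion_row[OF AC, symmetric]) simp
  finally show ?case unfolding A_def .
qed

lemma det_on_ldet: "det_on {0..<k} N = ldet (map N [0..<k]) {0..<k}"
  by (subst ldet_det_upt) (auto simp: det_on_jnf intro!: arg_cong[where f = det])



definition urows :: "nat \<Rightarrow> int \<Rightarrow> (int \<Rightarrow> 'r::comm_ring_1) list" where
  "urows m q = map (\<lambda>j c. if c = q + int j then 1 else 0) [0..<m]"

lemma urows_Suc: "urows (Suc m) q = (\<lambda>c. if c = q then 1 else 0) # urows m (q + 1)"
  unfolding urows_def by (simp add: upt_conv_Cons map_Suc_upt[symmetric] del: upt_Suc) (simp add: o_def add_ac)

lemma ldet_urows: "ldet (urows m q) {q..<q + int m} = (1::'r::comm_ring_1)"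
proof (induction m arbitrary: q)
  case 0 thus ?case by (simp add: urows_def)
next
  case (Suc m)
  have "ldet (urows (Suc m) q) {q..<q + int (Suc m)} =
     (\<Sum>c::int\<in>{q..<q + int (Suc m)}. (if c = q then (-1) ^ card {x\<in>{q..<q + int (Suc m)}. x < c} * ldet (urows m (q+1)) ({q..<q + int (Suc m)} - {c}) else (0::'r)))"
    unfolding urows_Suc ldet.simps by (intro sum.cong) auto
  also have "\<dots> = (-1) ^ card {x\<in>{q..<q + int (Suc m)}. x < q} * ldet (urows m (q+1)) ({q..<q + int (Suc m)} - {q})"
    by (subst sum.delta) auto
  also have "{x\<in>{q..<q + int (Suc m)}. x < q} = {}" by auto
  also have "{q..<q + int (Suc m)} - {q} = {q+1..<(q+1) + int m}" by auto
  finally show ?case using Suc.IH[of "q+1"] by (simp only: card.empty power_0 mult_1)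
qed

lemma urows_mem: "0 \<le> c - q \<Longrightarrow> c - q < int m \<Longrightarrow> (\<lambda>x. if x = c then 1 else 0) \<in> set (urows m q)"
  unfolding urows_def by (auto intro!: image_eqI[of _ _ "nat (c - q)"])

lemma ldet_app_urows:
  assumes "finite C" "\<forall>x\<in>C. x < q"
  shows "ldet (fs @ urows m q) (C \<union> {q..<q + int m}) = ldet fs C"
  using assms
proof (induction fs arbitrary: C)
  case Nil
  show ?case
  proof (cases "C = {}")
    case True thus ?thesis by (simp add: ldet_urows)
  next
    case False
    have "card (C \<union> {q..<q + int m}) = card C + m"
      using Nil.prems by (subst card_Un_disjoint) auto
    moreover have "card C > 0" using False Nil.prems card_gt_0_iff by blast
    ultimately have "ldet (urows m q) (C \<union> {q..<q + int m}) = (0::'a)"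
      using Nil.prems by (intro ldet_len) (auto simp: urows_def)
    thus ?thesis using False by simp
  qed
next
  case (Cons f fs)
  let ?Q = "{q..<q + int m}"
  have disj: "C \<inter> ?Q = {}" using Cons.prems by auto
  have "ldet ((f # fs) @ urows m q) (C \<union> ?Q) =
     (\<Sum>c\<in>C. (-1) ^ card {x\<in>C \<union> ?Q. x < c} * f c * ldet (fs @ urows m q) (C \<union> ?Q - {c})) +
     (\<Sum>c\<in>?Q. (-1) ^ card {x\<in>C \<union> ?Q. x < c} * f c * ldet (fs @ urows m q) (C \<union> ?Q - {c}))"
    using Cons.prems disj by (simp add: sum.union_disjoint)
  also have "(\<Sum>c\<in>?Q. (-1) ^ card {x\<in>C \<union> ?Q. x < c} * f c * ldet (fs @ urows m q) (C \<union> ?Q - {c})) = 0"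
  proof (intro sum.neutral ballI)
    fix c assume c: "c \<in> ?Q"
    have "ldet (fs @ urows m q) (C \<union> ?Q - {c}) = (0::'a)"
      by (rule ldet_zero_row[where g = "\<lambda>x. if x = c then 1 else 0"])
         (use Cons.prems c urows_mem[of c q m] in auto)
    thus "(-1) ^ card {x\<in>C \<union> ?Q. x < c} * f c * ldet (fs @ urows m q) (C \<union> ?Q - {c}) = 0" by simp
  qed
  also have "(\<Sum>c\<in>C. (-1) ^ card {x\<in>C \<union> ?Q. x < c} * f c * ldet (fs @ urows m q) (C \<union> ?Q - {c}))
      = (\<Sum>c\<in>C. (-1) ^ card {x\<in>C. x < c} * f c * ldet fs (C - {c}))"
  proof (rule sum.cong[OF refl])
    fix c assume c: "c \<in> C"
    have "{x\<in>C \<union> ?Q. x < c} = {x\<in>C. x < c}" using Cons.prems c by force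
    moreover have "C \<union> ?Q - {c} = (C - {c}) \<union> ?Q" using Cons.prems c by force
    moreover have "ldet (fs @ urows m q) ((C - {c}) \<union> ?Q) = ldet fs (C - {c})"
      using Cons.prems by (intro Cons.IH) auto
    ultimately show "(-1) ^ card {x\<in>C \<union> ?Q. x < c} * f c * ldet (fs @ urows m q) (C \<union> ?Q - {c})
       = (-1) ^ card {x\<in>C. x < c} * f c * ldet fs (C - {c})" by simp
  qed
  finally show ?case by simp
qed



definition Tg :: "(int \<Rightarrow> 'a::comm_ring_1) \<Rightarrow> int \<Rightarrow> int set \<Rightarrow> int set \<Rightarrow> 'a" where
  "Tg \<beta> t I J =
     (if \<exists>s. I \<union> {t} = shift1 J \<union> {s}
      then (let s = (THE s. I \<union> {t} = shift1 J \<union> {s}) in eps s I * \<beta> s)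
      else 0)"

definition Win :: "int \<Rightarrow> int \<Rightarrow> int set set" where
  "Win lo t = {I. I \<subseteq> {lo..t-1} \<and> card I = nat t}"

definition Js :: "int \<Rightarrow> int set \<Rightarrow> int \<Rightarrow> int set" where
  "Js t I s = (\<lambda>x. x - 1) ` (insert t I - {s})"

fun mpow :: "'i set \<Rightarrow> ('i \<Rightarrow> 'i \<Rightarrow> 'a::comm_ring_1) \<Rightarrow> nat \<Rightarrow> 'i \<Rightarrow> 'i \<Rightarrow> 'a" where
  "mpow X M 0 = (\<lambda>I J. if I = J then 1 else 0)"
| "mpow X M (Suc n) = (\<lambda>I J. \<Sum>K\<in>X. M I K * mpow X M n K J)"

lemma finite_Win: "finite (Win lo t)"
proof -
  have "Win lo t \<subseteq> Pow {lo..t-1}" unfolding Win_def by auto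
  thus ?thesis by (rule finite_subset) simp
qed

lemma Win_finite: "I \<in> Win lo t \<Longrightarrow> finite I"
  unfolding Win_def by (auto intro: finite_subset)

lemma Win_notin: "I \<in> Win lo t \<Longrightarrow> t \<notin> I"
  unfolding Win_def by auto

lemma shift1_Js: "shift1 (Js t I s) = insert t I - {s}"
  unfolding shift1_def Js_def by (auto simp: image_image)

lemma Js_shift1: "Js t I s = K \<longleftrightarrow> insert t I - {s} = shift1 K"
proof
  assume "Js t I s = K" thus "insert t I - {s} = shift1 K" using shift1_Js by metis
next
  assume "insert t I - {s} = shift1 K"
  thus "Js t I s = K" unfolding Js_def shift1_def by (auto simp: image_image)
qed

lemma card_shift1: "card (shift1 K) = card K"
  unfolding shift1_def by (rule card_image) (auto simp: inj_on_def)

lemma Js_inj: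
  assumes "s1 \<in> insert t I" "s2 \<in> insert t I" "Js t I s1 = Js t I s2"
  shows "s1 = s2"
proof -
  have "insert t I - {s1} = insert t I - {s2}" using assms(3) shift1_Js by metis
  thus ?thesis using assms(1,2) by blast
qed

lemma Tg_eqn_iff:
  assumes I: "I \<in> Win lo t" and K: "K \<in> Win lo t"
  shows "(I \<union> {t} = shift1 K \<union> {s}) \<longleftrightarrow> (s \<in> insert t I \<and> K = Js t I s)"
proof
  assume e: "I \<union> {t} = shift1 K \<union> {s}"
  have finI: "finite I" using Win_finite[OF I] .
  have finK: "finite K" using Win_finite[OF K] .
  have tI: "t \<notin> I" using Win_notin[OF I] .
  have cI: "card I = nat t" and cK: "card K = nat t" using I K unfolding Win_def by auto
  have c1: "card (I \<union> {t}) = Suc (nat t)" using finI tI cI by simp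
  have ns: "s \<notin> shift1 K"
  proof
    assume "s \<in> shift1 K"
    hence "shift1 K \<union> {s} = shift1 K" by auto
    hence "card (I \<union> {t}) = card K" using e card_shift1 by metis
    thus False using c1 cK by simp
  qed
  have "insert t I - {s} = shift1 K" using e ns by auto
  moreover have "s \<in> insert t I" using e by auto
  ultimately show "s \<in> insert t I \<and> K = Js t I s" using Js_shift1 by metis
next
  assume "s \<in> insert t I \<and> K = Js t I s"
  thus "I \<union> {t} = shift1 K \<union> {s}" using shift1_Js[of t I s] by auto
qed

lemma Tg_eq:
  assumes I: "I \<in> Win lo t" and K: "K \<in> Win lo t"
  shows "Tg \<beta> t I K = (\<Sum>s\<in>insert t I. if K = Js t I s then eps s I * \<beta> s else 0)"
proof (cases "\<exists>s0\<in>insert t I. K = Js t I s0")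
  case True
  then obtain s0 where s0: "s0 \<in> insert t I" "K = Js t I s0" by blast
  have "(\<Sum>s\<in>insert t I. if K = Js t I s then eps s I * \<beta> s else 0)
      = (\<Sum>s\<in>insert t I. if s = s0 then eps s I * \<beta> s else 0)"
    by (rule sum.cong[OF refl]) (use s0 Js_inj[of _ t I s0] in auto)
  also have "\<dots> = eps s0 I * \<beta> s0" using s0 Win_finite[OF I] by (simp add: sum.delta)
  finally have r: "(\<Sum>s\<in>insert t I. if K = Js t I s then eps s I * \<beta> s else 0) = eps s0 I * \<beta> s0" .
  have ex: "\<exists>s. I \<union> {t} = shift1 K \<union> {s}" using Tg_eqn_iff[OF I K] s0 by blast
  have th: "(THE s. I \<union> {t} = shift1 K \<union> {s}) = s0"
  proof (rule the_equality)
    show "I \<union> {t} = shift1 K \<union> {s0}" using Tg_eqn_iff[OF I K] s0 by blast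
  next
    fix s assume "I \<union> {t} = shift1 K \<union> {s}"
    hence "s \<in> insert t I" "K = Js t I s" using Tg_eqn_iff[OF I K] by blast+
    thus "s = s0" using s0 Js_inj by metis
  qed
  show ?thesis unfolding Tg_def using ex th r by simp
next
  case False
  hence "\<not> (\<exists>s. I \<union> {t} = shift1 K \<union> {s})" using Tg_eqn_iff[OF I K] by blast
  moreover have "(\<Sum>s\<in>insert t I. if K = Js t I s then eps s I * \<beta> s else 0) = 0"
    using False by (intro sum.neutral) auto
  ultimately show ?thesis unfolding Tg_def by simp
qed

lemma Tg_sum:
  assumes I: "I \<in> Win lo t"
  shows "(\<Sum>K\<in>Win lo t. Tg \<beta> t I K * g K) =
    (\<Sum>s\<in>insert t I. if Js t I s \<in> Win lo t then eps s I * \<beta> s * g (Js t I s) else 0)"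
proof -
  have finI: "finite (insert t I)" using Win_finite[OF I] by simp
  have "(\<Sum>K\<in>Win lo t. Tg \<beta> t I K * g K) =
     (\<Sum>K\<in>Win lo t. \<Sum>s\<in>insert t I. if K = Js t I s then eps s I * \<beta> s * g K else 0)"
    by (rule sum.cong[OF refl]) (simp add: Tg_eq[OF I] sum_distrib_right, intro sum.cong refl, simp)
  also have "\<dots> = (\<Sum>s\<in>insert t I. \<Sum>K\<in>Win lo t. if K = Js t I s then eps s I * \<beta> s * g K else 0)"
    by (rule sum.swap)
  also have "\<dots> = (\<Sum>s\<in>insert t I. if Js t I s \<in> Win lo t then eps s I * \<beta> s * g (Js t I s) else 0)"
    by (rule sum.cong[OF refl]) (simp add: sum.delta finite_Win)
  finally show ?thesis .
qed



definition brow :: "(int \<Rightarrow> 'a) \<Rightarrow> int \<Rightarrow> int \<Rightarrow> 'a" where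
  "brow \<beta> r = (\<lambda>c. \<beta> (c - r))"

definition band :: "(int \<Rightarrow> 'a) \<Rightarrow> int \<Rightarrow> nat \<Rightarrow> (int \<Rightarrow> 'a) list" where
  "band \<beta> r n = map (\<lambda>i. brow \<beta> (r + int i)) [0..<n]"

lemma band_Suc: "band \<beta> r (Suc n) = brow \<beta> r # band \<beta> (r + 1) n"
  unfolding band_def by (simp add: upt_conv_Cons map_Suc_upt[symmetric] del: upt_Suc) (simp add: o_def add_ac)

lemma transfer:
  fixes \<beta> :: "int \<Rightarrow> 'a::comm_ring_1"
  assumes \<beta>z: "\<And>s. s < lo \<or> t < s \<Longrightarrow> \<beta> s = 0"
    and I: "I \<in> Win lo t" and Y: "finite Y" "\<forall>y\<in>Y. r + int n + t \<le> y"
    and rest: "\<forall>f\<in>set rest. \<forall>c. c < r + int n + lo \<longrightarrow> f c = 0"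
  shows "ldet (band \<beta> r n @ rest) ((\<lambda>x. x + r) ` I \<union> {r + t..<r + int n + t} \<union> Y) =
    (\<Sum>J\<in>Win lo t. mpow (Win lo t) (Tg \<beta> t) n I J * ldet rest ((\<lambda>x. x + (r + int n)) ` J \<union> Y))"
  using I Y rest
proof (induction n arbitrary: r I)
  case 0
  have "(\<Sum>J\<in>Win lo t. mpow (Win lo t) (Tg \<beta> t) 0 I J * ldet rest ((\<lambda>x. x + (r + int 0)) ` J \<union> Y))
     = ldet rest ((\<lambda>x. x + r) ` I \<union> Y)"
  proof -
    have "(\<Sum>J\<in>Win lo t. mpow (Win lo t) (Tg \<beta> t) 0 I J * ldet rest ((\<lambda>x. x + (r + int 0)) ` J \<union> Y))
      = (\<Sum>J\<in>Win lo t. if I = J then ldet rest ((\<lambda>x. x + r) ` J \<union> Y) else 0)"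
      by (rule sum.cong) auto
    also have "\<dots> = ldet rest ((\<lambda>x. x + r) ` I \<union> Y)" using 0 by (simp add: sum.delta finite_Win)
    finally show ?thesis .
  qed
  thus ?case by (simp add: band_def)
next
  case (Suc n)
  let ?W = "Win lo t"
  let ?C = "(\<lambda>x. x + r) ` I \<union> {r + t..<r + int (Suc n) + t} \<union> Y"
  let ?L = "band \<beta> (r + 1) n @ rest"
  have finI: "finite I" using Win_finite[OF Suc.prems(1)] .
  have tI: "t \<notin> I" using Win_notin[OF Suc.prems(1)] .
  have Isub: "I \<subseteq> {lo..t-1}" using Suc.prems(1) unfolding Win_def by auto
  have finC: "finite ?C" using finI Suc.prems(2) by simp
  define X where "X = (\<lambda>J. ldet rest ((\<lambda>x. x + (r + int (Suc n))) ` J \<union> Y))"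
  have "ldet (band \<beta> r (Suc n) @ rest) ?C =
      (\<Sum>c\<in>?C. (-1) ^ card {x\<in>?C. x < c} * \<beta> (c - r) * ldet ?L (?C - {c}))"
    by (simp add: band_Suc brow_def)
  also have "\<dots> = (\<Sum>c\<in>(\<lambda>s. s + r) ` insert t I. (-1) ^ card {x\<in>?C. x < c} * \<beta> (c - r) * ldet ?L (?C - {c}))"
  proof (rule sum.mono_neutral_right[OF finC])
    show "(\<lambda>s. s + r) ` insert t I \<subseteq> ?C" by auto
    show "\<forall>c\<in>?C - (\<lambda>s. s + r) ` insert t I. (-1) ^ card {x\<in>?C. x < c} * \<beta> (c - r) * ldet ?L (?C - {c}) = 0"
    proof
      fix c assume c: "c \<in> ?C - (\<lambda>s. s + r) ` insert t I"
      have "t < c - r" using c Suc.prems(3) by (auto simp: image_iff)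
      thus "(-1) ^ card {x\<in>?C. x < c} * \<beta> (c - r) * ldet ?L (?C - {c}) = 0" using \<beta>z by simp
    qed
  qed
  also have "\<dots> = (\<Sum>s\<in>insert t I. (-1) ^ card {x\<in>?C. x < s + r} * \<beta> s * ldet ?L (?C - {s + r}))"
    by (subst sum.reindex) (auto simp: inj_on_def)
  also have "\<dots> = (\<Sum>s\<in>insert t I. if Js t I s \<in> ?W then eps s I * \<beta> s * (\<Sum>J\<in>?W. mpow ?W (Tg \<beta> t) n (Js t I s) J * X J) else 0)"
  proof (rule sum.cong[OF refl])
    fix s assume s: "s \<in> insert t I"
    have sle: "s \<le> t" using s Isub by auto
    have "{x\<in>?C. x < s + r} = (\<lambda>x. x + r) ` {x\<in>I. x < s}"
      using sle Suc.prems(3) by (auto simp: image_iff)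
    hence sg: "(-1) ^ card {x\<in>?C. x < s + r} = (eps s I :: 'a)"
      unfolding eps_def by (simp add: card_image inj_on_def)
    have Cs: "?C - {s + r} = (\<lambda>x. x + (r + 1)) ` Js t I s \<union> {(r + 1) + t..<(r + 1) + int n + t} \<union> Y"
    proof -
      have e1: "(\<lambda>x. x + (r + 1)) ` Js t I s = (\<lambda>x. x + r) ` (insert t I - {s})"
        unfolding Js_def by (auto simp: image_image)
      show ?thesis unfolding e1 using Suc.prems(3) sle s tI
      proof (auto simp: image_iff)
        fix x assume "\<not> r + 1 + t \<le> x" "r + t \<le> x" "s \<in> I"
        hence "x = t + r" "t \<noteq> s" using tI by auto
        thus "\<exists>xa\<in>insert t I - {s}. x = xa + r" by blast
      qed
    qed
    show "(-1) ^ card {x\<in>?C. x < s + r} * \<beta> s * ldet ?L (?C - {s + r}) =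
        (if Js t I s \<in> ?W then eps s I * \<beta> s * (\<Sum>J\<in>?W. mpow ?W (Tg \<beta> t) n (Js t I s) J * X J) else 0)"
    proof (cases "Js t I s \<in> ?W")
      case True
      have "ldet ?L (?C - {s + r}) = (\<Sum>J\<in>?W. mpow ?W (Tg \<beta> t) n (Js t I s) J * X J)"
        unfolding Cs X_def
        by (subst Suc.IH[OF True Suc.prems(2)]) (use Suc.prems(3,4) in \<open>auto simp: add_ac\<close>)
      thus ?thesis using True sg by simp
    next
      case False
      have cJ: "card (Js t I s) = nat t"
      proof -
        have "card (Js t I s) = card (insert t I - {s})"
          unfolding Js_def by (rule card_image) (auto simp: inj_on_def)
        also have "\<dots> = card I" using s finI tI by (simp add: card_Diff_singleton)
        also have "\<dots> = nat t" using Suc.prems(1) unfolding Win_def by auto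
        finally show ?thesis .
      qed
      have "\<not> Js t I s \<subseteq> {lo..t-1}" using False cJ unfolding Win_def by auto
      moreover have "Js t I s \<subseteq> {lo - 1..t-1}" using Isub s unfolding Js_def by auto
      ultimately obtain x where "x \<in> Js t I s" "x \<notin> {lo..t-1}" "x \<in> {lo - 1..t-1}" by blast
      hence "x = lo - 1" by auto
      hence lJ: "lo - 1 \<in> Js t I s" using \<open>x \<in> Js t I s\<close> by simp
      have mem: "r + lo \<in> ?C - {s + r}" unfolding Cs by (rule UnI1, rule UnI1, rule image_eqI[of _ _ "lo - 1"]) (auto simp: lJ)
      have "ldet ?L (?C - {s + r}) = 0"
      proof (rule ldet_zero_col[OF _ mem])
        show "finite (?C - {s + r})" using finC by simp
        show "\<forall>g\<in>set ?L. g (r + lo) = 0"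
          using Suc.prems(4) \<beta>z by (auto simp: band_def brow_def)
      qed
      thus ?thesis using False by simp
    qed
  qed
  also have "\<dots> = (\<Sum>K\<in>?W. Tg \<beta> t I K * (\<Sum>J\<in>?W. mpow ?W (Tg \<beta> t) n K J * X J))"
    by (rule Tg_sum[OF Suc.prems(1), symmetric])
  also have "\<dots> = (\<Sum>J\<in>?W. (\<Sum>K\<in>?W. Tg \<beta> t I K * mpow ?W (Tg \<beta> t) n K J) * X J)"
  proof -
    have "(\<Sum>K\<in>?W. Tg \<beta> t I K * (\<Sum>J\<in>?W. mpow ?W (Tg \<beta> t) n K J * X J))
        = (\<Sum>K\<in>?W. \<Sum>J\<in>?W. Tg \<beta> t I K * mpow ?W (Tg \<beta> t) n K J * X J)"
      by (simp add: sum_distrib_left mult.assoc)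
    also have "\<dots> = (\<Sum>J\<in>?W. \<Sum>K\<in>?W. Tg \<beta> t I K * mpow ?W (Tg \<beta> t) n K J * X J)"
      by (rule sum.swap)
    also have "\<dots> = (\<Sum>J\<in>?W. (\<Sum>K\<in>?W. Tg \<beta> t I K * mpow ?W (Tg \<beta> t) n K J) * X J)"
      by (simp add: sum_distrib_right)
    finally show ?thesis .
  qed
  also have "\<dots> = (\<Sum>J\<in>?W. mpow ?W (Tg \<beta> t) (Suc n) I J * X J)" by simp
  finally show ?case unfolding X_def .
qed



context
  fixes \<omega> :: "int \<Rightarrow> 'a::field" and a b :: int
  assumes a1: "a \<ge> 1" and b1: "b \<ge> 1"
    and \<omega>0: "\<And>s. s < -b \<or> a < s \<Longrightarrow> \<omega> s = 0"
begin

lemma betaw_z: "s < -b \<or> a < s \<Longrightarrow> betaw \<omega> s = 0"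
  using \<omega>0[of s] a1 b1 unfolding betaw_def by auto

lemma betat_z: "s < -b-1 \<or> a-1 < s \<Longrightarrow> betat \<omega> s = 0"
  using betaw_z[of "s+1"] unfolding betat_def by auto

lemma I0_Win: "{0..a-1} \<in> Win (-b) a"
  using a1 b1 unfolding Win_def by auto

lemma It0_Win: "{0..a-2} \<in> Win (-b-1) (a-1)"
  using a1 b1 unfolding Win_def by auto

lemma urows_J:
  assumes J: "J \<in> Win (-b) a"
  shows "ldet (urows (nat a) (int k)) ((\<lambda>x. x + int k) ` J) = (if J = {0..a-1} then 1 else (0::'a))"
proof (cases "J = {0..a-1}")
  case True
  have "(\<lambda>x. x + int k) ` {0..a-1} = {int k..<int k + int (nat a)}"
  proof -
    have "(\<lambda>x. x + int k) ` {0..a-1} = {0 + int k..a - 1 + int k}" by simp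
    also have "\<dots> = {int k..<int k + int (nat a)}" using a1 by auto
    finally show ?thesis .
  qed
  thus ?thesis using True ldet_urows[of "nat a" "int k"] a1 by simp
next
  case False
  have "\<not> {0..a-1} \<subseteq> J"
  proof
    assume sub: "{0..a-1} \<subseteq> J"
    have "card {0..a-1} = card J" using J a1 unfolding Win_def by auto
    hence "{0..a-1} = J" using sub card_subset_eq[OF Win_finite[OF J] sub] by simp
    thus False using False by simp
  qed
  then obtain j where j: "j \<in> {0..a-1}" "j \<notin> J" by blast
  have "ldet (urows (nat a) (int k)) ((\<lambda>x. x + int k) ` J) = (0::'a)"
  proof (rule ldet_zero_row[where g = "\<lambda>x. if x = j + int k then 1 else 0"])
    show "finite ((\<lambda>x. x + int k) ` J)" using Win_finite[OF J] by simp
    show "(\<lambda>x. if x = j + int k then 1 else 0) \<in> set (urows (nat a) (int k))"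
      by (rule urows_mem) (use j a1 in auto)
    show "\<forall>x\<in>(\<lambda>x. x + int k) ` J. (if x = j + int k then 1 else 0) = (0::'a)" using j by auto
  qed
  thus ?thesis using False by simp
qed

lemma stage2:
  assumes K: "K \<in> Win (-b-1) (a-1)" and l: "l \<le> k"
  shows "ldet (band (betaw \<omega>) (int l) (k-l) @ urows (nat a) (int k))
           ((\<lambda>x. x + int l) ` K \<union> {int l + a - 1..<int k + a}) =
         (\<Sum>L\<in>Win (-b) a. Umat a K L * mpow (Win (-b) a) (Tg (betaw \<omega>) a) (k-l) L {0..a-1})"
proof (cases "-b-1 \<in> K")
  case True
  have "ldet (band (betaw \<omega>) (int l) (k-l) @ urows (nat a) (int k))
           ((\<lambda>x. x + int l) ` K \<union> {int l + a - 1..<int k + a}) = (0::'a)"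
  proof (rule ldet_zero_col[where c = "int l - b - 1"])
    show "finite ((\<lambda>x. x + int l) ` K \<union> {int l + a - 1..<int k + a})" using Win_finite[OF K] by simp
    show "int l - b - 1 \<in> (\<lambda>x. x + int l) ` K \<union> {int l + a - 1..<int k + a}"
      using True by (intro UnI1 image_eqI[of _ _ "-b-1"]) auto
    show "\<forall>g\<in>set (band (betaw \<omega>) (int l) (k-l) @ urows (nat a) (int k)). g (int l - b - 1) = 0"
      using l b1 by (auto simp: band_def brow_def urows_def intro!: betaw_z)
  qed
  moreover have "Umat a K L = (0::'a)" if "L \<in> Win (-b) a" for L
    using that True unfolding Umat_def Win_def by auto
  ultimately show ?thesis by simp
next
  case False
  define I' where "I' = insert (a-1) K"
  have KW: "K \<subseteq> {-b-1..a-2}" "card K = nat (a-1)" using K unfolding Win_def by auto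
  have aK: "a - 1 \<notin> K" using KW by auto
  have Kb: "-b \<le> x" if "x \<in> K" for x
  proof -
    have "x \<ge> -b-1" "x \<noteq> -b-1" using that KW(1) False by auto
    thus ?thesis by simp
  qed
  have I'W: "I' \<in> Win (-b) a"
    using KW Kb b1 a1 aK Win_finite[OF K] unfolding Win_def I'_def by (auto simp: subset_iff)
  have cols: "(\<lambda>x. x + int l) ` K \<union> {int l + a - 1..<int k + a} =
      (\<lambda>x. x + int l) ` I' \<union> {int l + a..<int l + int (k-l) + a} \<union> {}"
    using l unfolding I'_def by auto
  have "ldet (band (betaw \<omega>) (int l) (k-l) @ urows (nat a) (int k))
           ((\<lambda>x. x + int l) ` K \<union> {int l + a - 1..<int k + a}) =
     (\<Sum>J\<in>Win (-b) a. mpow (Win (-b) a) (Tg (betaw \<omega>) a) (k-l) I' J *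
        ldet (urows (nat a) (int k)) ((\<lambda>x. x + (int l + int (k-l))) ` J \<union> {}))"
    unfolding cols
  proof (rule transfer[OF _ I'W])
    show "\<And>s. s < -b \<or> a < s \<Longrightarrow> betaw \<omega> s = 0" by (rule betaw_z)
    show "\<forall>f\<in>set (urows (nat a) (int k)). \<forall>c. c < int l + int (k - l) + - b \<longrightarrow> f c = 0"
      using l b1 by (auto simp: urows_def)
  qed auto
  also have "\<dots> = (\<Sum>J\<in>Win (-b) a. mpow (Win (-b) a) (Tg (betaw \<omega>) a) (k-l) I' J *
        (if J = {0..a-1} then 1 else 0))"
    by (rule sum.cong[OF refl]) (use l urows_J in \<open>auto simp: of_nat_diff\<close>)
  also have "\<dots> = mpow (Win (-b) a) (Tg (betaw \<omega>) a) (k-l) I' {0..a-1}"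
    using I0_Win by (simp add: finite_Win sum.delta' if_distrib[of "\<lambda>x. _ * x"] cong: if_cong)
  also have "\<dots> = (\<Sum>L\<in>Win (-b) a. Umat a K L * mpow (Win (-b) a) (Tg (betaw \<omega>) a) (k-l) L {0..a-1})"
  proof -
    have "(\<Sum>L\<in>Win (-b) a. Umat a K L * mpow (Win (-b) a) (Tg (betaw \<omega>) a) (k-l) L {0..a-1})
      = (\<Sum>L\<in>Win (-b) a. if I' = L then mpow (Win (-b) a) (Tg (betaw \<omega>) a) (k-l) L {0..a-1} else 0)"
      by (rule sum.cong[OF refl]) (auto simp: Umat_def I'_def)
    also have "\<dots> = mpow (Win (-b) a) (Tg (betaw \<omega>) a) (k-l) I' {0..a-1}"
      using I'W by (simp add: finite_Win sum.delta)
    finally show ?thesis by simp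
  qed
  finally show ?thesis .
qed

lemma Fcof_T:
  assumes l: "l \<le> k"
  shows "Fcof \<omega> k l = (\<Sum>K\<in>Win (-b-1) (a-1).
      mpow (Win (-b-1) (a-1)) (Tg (betat \<omega>) (a-1)) l {0..a-2} K *
      (\<Sum>L\<in>Win (-b) a. Umat a K L * mpow (Win (-b) a) (Tg (betaw \<omega>) a) (k-l) L {0..a-1}))"
proof -
  define N where "N = (\<lambda>i j. IAmat \<omega> (if i < l then i else Suc i) (Suc j))"
  define R :: "(int \<Rightarrow> 'a) list" where
    "R = map (\<lambda>i c. - betat \<omega> (c - int i)) [0..<l] @ band (betaw \<omega>) (int l) (k-l)"
  define rest :: "(int \<Rightarrow> 'a) list" where "rest = band (betaw \<omega>) (int l) (k-l) @ urows (nat a) (int k)"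
  have h1: "Fcof \<omega> k l = (-1)^l * ldet (map N [0..<k]) {0..<k}"
    unfolding Fcof_def det_on_ldet N_def ..
  have h2: "map N [0..<k] = map (\<lambda>f. f \<circ> int) R"
  proof (rule nth_equalityI)
    show "length (map N [0..<k]) = length (map (\<lambda>f. f \<circ> int) R)" using l by (simp add: R_def band_def)
    fix i assume i: "i < length (map N [0..<k])"
    show "map N [0..<k] ! i = map (\<lambda>f. f \<circ> int) R ! i"
    proof (cases "i < l")
      case True
      thus ?thesis using i by (auto simp: R_def nth_append N_def IAmat_def Amat_def betat_def betaw_def fun_eq_iff) (smt (verit))+
    next
      case False
      thus ?thesis using i l by (auto simp: R_def nth_append N_def IAmat_def Amat_def band_def brow_def betaw_def fun_eq_iff)
    qed
  qed
  have h3: "ldet (map (\<lambda>f. f \<circ> int) R) {0..<k} = ldet R {0..<int k}"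
    using ldet_mono[of "{0..<k}" int R] by (simp add: strict_mono_on_def image_int_atLeastLessThan)
  have h4: "ldet R {0..<int k} = (-1)^l * ldet (band (betat \<omega>) 0 l @ band (betaw \<omega>) (int l) (k-l)) {0..<int k}"
  proof -
    have "band (betat \<omega>) 0 l = map (\<lambda>i c. betat \<omega> (c - int i)) [0..<l]"
      by (simp add: band_def brow_def)
    thus ?thesis unfolding R_def using ldet_neg[of "\<lambda>i c. betat \<omega> (c - int i)" "[0..<l]"] by simp
  qed
  have h5: "ldet (band (betat \<omega>) 0 l @ band (betaw \<omega>) (int l) (k-l)) {0..<int k}
      = ldet (band (betat \<omega>) 0 l @ rest) ({0..<int k} \<union> {int k..<int k + int (nat a)})"
    unfolding rest_def using ldet_app_urows[of "{0..<int k}" "int k" "band (betat \<omega>) 0 l @ band (betaw \<omega>) (int l) (k-l)" "nat a"]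
    by simp
  have h6: "{0..<int k} \<union> {int k..<int k + int (nat a)} =
     (\<lambda>x. x + 0) ` {0..a-2} \<union> {0 + (a-1)..<0 + int l + (a-1)} \<union> {int l + a - 1..<int k + a}"
    using l a1 by auto
  have h7: "ldet (band (betat \<omega>) 0 l @ rest)
     ((\<lambda>x. x + 0) ` {0..a-2} \<union> {0 + (a-1)..<0 + int l + (a-1)} \<union> {int l + a - 1..<int k + a}) =
     (\<Sum>K\<in>Win (-b-1) (a-1). mpow (Win (-b-1) (a-1)) (Tg (betat \<omega>) (a-1)) l {0..a-2} K *
        ldet rest ((\<lambda>x. x + (0 + int l)) ` K \<union> {int l + a - 1..<int k + a}))"
  proof (rule transfer[OF _ It0_Win])
    show "\<And>s. s < -b-1 \<or> a-1 < s \<Longrightarrow> betat \<omega> s = 0" by (rule betat_z)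
    show "\<forall>f\<in>set rest. \<forall>c. c < 0 + int l + (-b-1) \<longrightarrow> f c = 0"
      using l b1 by (auto simp: rest_def band_def brow_def urows_def intro!: betaw_z)
  qed auto
  have h8: "ldet rest ((\<lambda>x. x + (0 + int l)) ` K \<union> {int l + a - 1..<int k + a}) =
      (\<Sum>L\<in>Win (-b) a. Umat a K L * mpow (Win (-b) a) (Tg (betaw \<omega>) a) (k-l) L {0..a-1})"
    if "K \<in> Win (-b-1) (a-1)" for K
    using stage2[OF that l] unfolding rest_def by simp
  show ?thesis
    unfolding h1 h2 h3 h4 h5 h6 h7 using h8 by simp
qed

end



lemma fps_of_poly_of_int: "fps_of_poly (of_int k :: 'a::comm_ring_1 poly) = of_int k"
  by (simp add: of_int_poly fps_of_poly_const fps_of_int)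

lemma fps_of_poly_det_on:
  "fps_of_poly (det_on X M) = det_on X (\<lambda>i j. fps_of_poly (M i j))"
  unfolding det_on_def by (simp add: fps_of_poly_sum fps_of_poly_mult fps_of_poly_prod fps_of_poly_of_int)

lemma fps_of_poly_adj_on:
  "fps_of_poly (adj_on X M i j) = adj_on X (\<lambda>i j. fps_of_poly (M i j)) i j"
  unfolding adj_on_def fps_of_poly_det_on by (rule arg_cong[where f = "det_on X"]) (auto simp: fun_eq_iff)

definition zM :: "('i \<Rightarrow> 'i \<Rightarrow> 'a::comm_ring_1) \<Rightarrow> 'i \<Rightarrow> 'i \<Rightarrow> 'a poly" where
  "zM M I J = (if I = J then 1 else 0) - [:0, M I J:]"

definition Sg :: "'i set \<Rightarrow> ('i \<Rightarrow> 'i \<Rightarrow> 'a::comm_ring_1) \<Rightarrow> 'i \<Rightarrow> 'i \<Rightarrow> 'a fps" where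
  "Sg X M I J = Abs_fps (\<lambda>n. mpow X M n I J)"

lemma fps_zM: "fps_of_poly (zM M I J) = (if I = J then 1 else 0) - fps_X * fps_const (M I J)"
  by (rule fps_ext) (auto simp: zM_def coeff_pCons split: nat.splits)

lemma neumann:
  fixes M :: "'i \<Rightarrow> 'i \<Rightarrow> 'a::comm_ring_1"
  assumes fin: "finite X" and IX: "I \<in> X"
  shows "(\<Sum>K\<in>X. fps_of_poly (zM M I K) * Sg X M K J) = (if I = J then 1 else 0)"
proof (rule fps_ext)
  fix n
  have "fps_nth (\<Sum>K\<in>X. fps_of_poly (zM M I K) * Sg X M K J) n =
     (\<Sum>K\<in>X. (if I = K then mpow X M n K J else 0) - (if n = 0 then 0 else M I K * mpow X M (n - 1) K J))"
    unfolding fps_sum_nth fps_zM by (intro sum.cong refl) (auto simp: Sg_def algebra_simps)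
  also have "\<dots> = mpow X M n I J - (if n = 0 then 0 else mpow X M n I J)"
    using fin IX by (cases n) (auto simp: sum_subtractf sum.delta)
  also have "\<dots> = fps_nth (if I = J then 1 else 0 :: 'a fps) n"
    by (cases n) auto
  finally show "fps_nth (\<Sum>K\<in>X. fps_of_poly (zM M I K) * Sg X M K J) n = fps_nth (if I = J then 1 else 0 :: 'a fps) n" .
qed


lemma adj_Sg:
  fixes M :: "'i \<Rightarrow> 'i \<Rightarrow> 'a::comm_ring_1"
  assumes fin: "finite X" and I: "I \<in> X" and J: "J \<in> X"
  shows "adj_on X (\<lambda>I J. fps_of_poly (zM M I J)) I J = det_on X (\<lambda>I J. fps_of_poly (zM M I J)) * Sg X M I J"
proof -
  define F where "F = (\<lambda>I J. fps_of_poly (zM M I J))"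
  have "adj_on X F I J = (\<Sum>L\<in>X. adj_on X F I L * (if L = J then 1 else 0))"
    using fin J by (simp add: sum.delta' if_distrib[of "\<lambda>x. _ * x"] cong: if_cong)
  also have "\<dots> = (\<Sum>L\<in>X. adj_on X F I L * (\<Sum>K\<in>X. F L K * Sg X M K J))"
    by (rule sum.cong[OF refl]) (simp add: neumann[OF fin] F_def)
  also have "\<dots> = (\<Sum>L\<in>X. \<Sum>K\<in>X. adj_on X F I L * F L K * Sg X M K J)"
    by (simp add: sum_distrib_left mult.assoc)
  also have "\<dots> = (\<Sum>K\<in>X. \<Sum>L\<in>X. adj_on X F I L * F L K * Sg X M K J)"
    by (rule sum.swap)
  also have "\<dots> = (\<Sum>K\<in>X. (\<Sum>L\<in>X. adj_on X F I L * F L K) * Sg X M K J)"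
    by (simp add: sum_distrib_right)
  also have "\<dots> = (\<Sum>K\<in>X. (if I = K then det_on X F else 0) * Sg X M K J)"
    by (rule sum.cong[OF refl]) (simp add: adj_on_identities(2)[OF fin I])
  also have "\<dots> = det_on X F * Sg X M I J"
    using fin I by (simp add: sum.delta if_distrib[of "\<lambda>x. x * _"] cong: if_cong)
  finally show ?thesis unfolding F_def .
qed



lemma idxT_Win: "idxT a b = Win (-b) a"
  unfolding idxT_def Win_def ..

lemma idxTt_Win: "idxTt a b = Win (-b-1) (a-1)"
proof -
  have "a - 2 = a - 1 - 1" by simp
  thus ?thesis unfolding idxTt_def Win_def by simp
qed

lemma Tmat_Tg: "Tmat \<omega> a = Tg (betaw \<omega>) a"
  unfolding Tmat_def Tg_def by (simp add: fun_eq_iff)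

lemma Ttmat_Tg: "Ttmat \<omega> a = Tg (betat \<omega>) (a - 1)"
  unfolding Ttmat_def Tg_def by (simp add: fun_eq_iff)

lemma zTmat_zM: "zTmat \<omega> a = zM (Tg (betaw \<omega>) a)"
  unfolding zTmat_def zM_def Tmat_Tg by (simp add: fun_eq_iff)

lemma zTtmat_zM: "zTtmat \<omega> a = zM (Tg (betat \<omega>) (a - 1))"
  unfolding zTtmat_def zM_def Ttmat_Tg by (simp add: fun_eq_iff)

lemma fps_of_poly_Umat: "fps_of_poly (Umat a K L) = fps_const (Umat a K L)"
  unfolding Umat_def by simp

context
  fixes \<omega> :: "int \<Rightarrow> 'a::field" and a b :: int
  assumes a1: "a \<ge> 1" and b1: "b \<ge> 1"
    and \<omega>0: "\<And>s. s < -b \<or> a < s \<Longrightarrow> \<omega> s = 0"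
begin

abbreviation "W \<equiv> Win (-b) a"
abbreviation "Wt \<equiv> Win (-b-1) (a-1)"
abbreviation "T \<equiv> Tg (betaw \<omega>) a"
abbreviation "Tt \<equiv> Tg (betat \<omega>) (a-1)"

lemma gf_core:
  "(\<Sum>K\<in>Wt. \<Sum>L\<in>W. Sg Wt Tt {0..a-2} K * fps_const (Umat a K L) * Sg W T L {0..a-1}) = Abs_fps (Gseq \<omega>)"
proof (rule fps_ext)
  fix n
  have "fps_nth (\<Sum>K\<in>Wt. \<Sum>L\<in>W. Sg Wt Tt {0..a-2} K * fps_const (Umat a K L) * Sg W T L {0..a-1}) n
     = (\<Sum>K\<in>Wt. \<Sum>L\<in>W. \<Sum>i=0..n. mpow Wt Tt i {0..a-2} K * (Umat a K L * mpow W T (n - i) L {0..a-1}))"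
    unfolding fps_sum_nth
  proof (intro sum.cong refl)
    fix K L
    have e: "Sg Wt Tt {0..a-2} K * fps_const (Umat a K L) * Sg W T L {0..a-1} =
        fps_const (Umat a K L) * (Sg Wt Tt {0..a-2} K * Sg W T L {0..a-1})" by (simp only: mult_ac)
    show "fps_nth (Sg Wt Tt {0..a-2} K * fps_const (Umat a K L) * Sg W T L {0..a-1}) n =
       (\<Sum>i=0..n. mpow Wt Tt i {0..a-2} K * (Umat a K L * mpow W T (n - i) L {0..a-1}))"
      unfolding e fps_mult_left_const_nth unfolding fps_mult_nth Sg_def fps_nth_Abs_fps
      by (simp add: sum_distrib_left mult.left_commute)
  qed
  also have "\<dots> = (\<Sum>K\<in>Wt. \<Sum>i=0..n. \<Sum>L\<in>W. mpow Wt Tt i {0..a-2} K * (Umat a K L * mpow W T (n - i) L {0..a-1}))"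
    by (intro sum.cong refl sum.swap)
  also have "\<dots> = (\<Sum>i=0..n. \<Sum>K\<in>Wt. \<Sum>L\<in>W. mpow Wt Tt i {0..a-2} K * (Umat a K L * mpow W T (n - i) L {0..a-1}))"
    by (rule sum.swap)
  also have "\<dots> = (\<Sum>i=0..n. Fcof \<omega> n i)"
  proof (rule sum.cong[OF refl])
    fix i assume "i \<in> {0..n}"
    hence i: "i \<le> n" by simp
    show "(\<Sum>K\<in>Wt. \<Sum>L\<in>W. mpow Wt Tt i {0..a-2} K * (Umat a K L * mpow W T (n - i) L {0..a-1})) = Fcof \<omega> n i"
      by (subst Fcof_T[OF a1 b1 _ i]) (simp add: \<omega>0, rule sum.cong[OF refl], rule sum_distrib_left[symmetric])
  qed
  also have "\<dots> = fps_nth (Abs_fps (Gseq \<omega>)) n" by (simp add: Gseq_def)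
  finally show "fps_nth (\<Sum>K\<in>Wt. \<Sum>L\<in>W. Sg Wt Tt {0..a-2} K * fps_const (Umat a K L) * Sg W T L {0..a-1}) n = fps_nth (Abs_fps (Gseq \<omega>)) n" .
qed

lemma gf_main:
  "Abs_fps (Gseq \<omega>) * fps_of_poly (Dtpoly \<omega> a b * Dpoly \<omega> a b) = fps_of_poly (Nt1poly \<omega> a b)"
proof -
  define Dt where "Dt = det_on Wt (\<lambda>I J. fps_of_poly (zM Tt I J))"
  define D where "D = det_on W (\<lambda>I J. fps_of_poly (zM T I J))"
  have eD: "fps_of_poly (Dtpoly \<omega> a b * Dpoly \<omega> a b) = Dt * D"
    unfolding Dtpoly_def Dpoly_def Dt_def D_def idxT_Win idxTt_Win zTmat_zM zTtmat_zM fps_of_poly_mult fps_of_poly_det_on ..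
  have a1': "fps_of_poly (adj_on Wt (zM Tt) {0..a-2} K) = Dt * Sg Wt Tt {0..a-2} K" if "K \<in> Wt" for K
    unfolding fps_of_poly_adj_on Dt_def by (rule adj_Sg[OF finite_Win It0_Win[OF a1 b1 \<omega>0] that])
  have a2': "fps_of_poly (adj_on W (zM T) L {0..a-1}) = D * Sg W T L {0..a-1}" if "L \<in> W" for L
    unfolding fps_of_poly_adj_on D_def by (rule adj_Sg[OF finite_Win that I0_Win[OF a1 b1 \<omega>0]])
  have "fps_of_poly (Nt1poly \<omega> a b) =
     (\<Sum>K\<in>Wt. \<Sum>L\<in>W. fps_of_poly (adj_on Wt (zM Tt) {0..a-2} K) * fps_const (Umat a K L) *
        fps_of_poly (adj_on W (zM T) L {0..a-1}))"
    unfolding Nt1poly_def idxT_Win idxTt_Win zTmat_zM zTtmat_zM fps_of_poly_sum fps_of_poly_mult fps_of_poly_Umat ..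
  also have "\<dots> = (\<Sum>K\<in>Wt. \<Sum>L\<in>W. (Dt * D) * (Sg Wt Tt {0..a-2} K * fps_const (Umat a K L) * Sg W T L {0..a-1}))"
    by (intro sum.cong refl) (simp add: a1' a2' mult_ac)
  also have "\<dots> = (Dt * D) * Abs_fps (Gseq \<omega>)"
    unfolding gf_core[symmetric] by (simp add: sum_distrib_left)
  finally show ?thesis unfolding eD by (simp add: mult_ac)
qed

end



lemma det_on_id:
  assumes fin: "finite X"
  shows "det_on X (\<lambda>i j. if i = j then (1::'r::comm_ring_1) else 0) = 1"
proof -
  define n where "n = card X"
  obtain f where f: "bij_betw f {0..<n} X"
    using ex_bij_betw_nat_finite[OF fin] n_def atLeast0LessThan by metis
  have injf: "inj_on f {0..<n}" using f by (auto simp: bij_betw_def)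
  have "det_on X (\<lambda>i j. if i = j then (1::'r) else 0) = det_on {0..<n} (\<lambda>i j. if f i = f j then 1 else 0)"
    by (rule det_on_bij[OF f]) simp
  also have "\<dots> = det (mat n n (\<lambda>(i,j). if f i = f j then (1::'r) else 0))" by (rule det_on_jnf)
  also have "mat n n (\<lambda>(i,j). if f i = f j then (1::'r) else 0) = 1\<^sub>m n"
    by (rule eq_matI) (use injf in \<open>auto simp: inj_on_eq_iff\<close>)
  finally show ?thesis by simp
qed

lemma prod_lin:
  fixes f :: "'i \<Rightarrow> 'a::comm_ring_1 poly"
  assumes "finite A" "\<forall>i\<in>A. degree (f i) \<le> 1"
  shows "degree (\<Prod>i\<in>A. f i) \<le> card A \<and> coeff (\<Prod>i\<in>A. f i) (card A) = (\<Prod>i\<in>A. coeff (f i) 1)"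
  using assms
proof (induction A rule: finite_induct)
  case empty thus ?case by simp
next
  case (insert x F)
  define P where "P = (\<Prod>i\<in>F. f i)"
  have dP: "degree P \<le> card F" and cP: "coeff P (card F) = (\<Prod>i\<in>F. coeff (f i) 1)"
    using insert unfolding P_def by auto
  have df: "degree (f x) \<le> 1" using insert by auto
  have "degree (f x * P) \<le> card (insert x F)"
    using degree_mult_le[of "f x" P] dP df insert by simp
  moreover have "coeff (f x * P) (Suc (card F)) = coeff (f x) 1 * coeff P (card F)"
  proof -
    have "coeff (f x * P) (Suc (card F)) = (\<Sum>i\<le>Suc (card F). coeff (f x) i * coeff P (Suc (card F) - i))"
      by (rule coeff_mult)
    also have "\<dots> = (\<Sum>i\<le>Suc (card F). if i = 1 then coeff (f x) 1 * coeff P (card F) else 0)"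
    proof (rule sum.cong[OF refl])
      fix i assume "i \<in> {..Suc (card F)}"
      show "coeff (f x) i * coeff P (Suc (card F) - i) = (if i = 1 then coeff (f x) 1 * coeff P (card F) else 0)"
      proof (cases "i = 0")
        case True thus ?thesis using dP by (simp add: coeff_eq_0)
      next
        case False thus ?thesis using df by (cases "i = 1") (auto simp: coeff_eq_0)
      qed
    qed
    also have "\<dots> = coeff (f x) 1 * coeff P (card F)" by simp
    finally show ?thesis .
  qed
  ultimately show ?case using insert cP unfolding P_def by simp
qed

lemma of_int_mult_poly: "(of_int k :: 'a::comm_ring_1 poly) * q = Polynomial.smult (of_int k) q"
  by (simp add: of_int_poly)

lemma det_zM:
  fixes M :: "'i \<Rightarrow> 'i \<Rightarrow> 'a::comm_ring_1"
  assumes fin: "finite X"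
  shows "degree (det_on X (zM M)) \<le> card X \<and> coeff (det_on X (zM M)) (card X) = (-1) ^ card X * det_on X M"
proof -
  have lin: "\<forall>i\<in>X. degree (zM M i (p i)) \<le> 1" for p
    unfolding zM_def by (auto intro: order.trans[OF degree_diff_le])
  have c1: "coeff (zM M i j) (Suc 0) = - M i j" for i j unfolding zM_def by simp
  have "degree (det_on X (zM M)) \<le> card X"
    unfolding det_on_def
  proof (rule degree_sum_le)
    show "finite {p. p permutes X}" using fin finite_permutations by blast
    fix p show "degree (of_int (sign p) * (\<Prod>i\<in>X. zM M i (p i))) \<le> card X"
      unfolding of_int_mult_poly using prod_lin[OF fin lin[of p]] degree_smult_le order.trans by blast
  qed
  moreover have "coeff (det_on X (zM M)) (card X) = (-1) ^ card X * det_on X M"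
  proof -
    have "coeff (det_on X (zM M)) (card X) = (\<Sum>p\<in>{p. p permutes X}. of_int (sign p) * (\<Prod>i\<in>X. - M i (p i)))"
      unfolding det_on_def coeff_sum of_int_mult_poly coeff_smult
      by (intro sum.cong refl) (use prod_lin[OF fin lin] in \<open>simp add: c1\<close>)
    also have "\<dots> = (\<Sum>p\<in>{p. p permutes X}. (-1) ^ card X * (of_int (sign p) * (\<Prod>i\<in>X. M i (p i))))"
      by (intro sum.cong refl) (simp add: prod_uminus mult_ac)
    also have "\<dots> = (-1) ^ card X * det_on X M" unfolding det_on_def by (simp add: sum_distrib_left)
    finally show ?thesis .
  qed
  ultimately show ?thesis by simp
qed

lemma coeff0_det_zM:
  fixes M :: "'i \<Rightarrow> 'i \<Rightarrow> 'a::comm_ring_1"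
  assumes fin: "finite X"
  shows "coeff (det_on X (zM M)) 0 = 1"
proof -
  have "coeff (det_on X (zM M)) 0 = poly (det_on X (zM M)) 0" by (simp add: poly_0_coeff_0)
  also have "\<dots> = det_on X (\<lambda>i j. if i = j then (1::'a) else 0)"
    unfolding det_on_def poly_sum poly_mult poly_prod poly_of_int
    by (intro sum.cong refl arg_cong2[where f="(*)"] prod.cong) (auto simp: zM_def)
  also have "\<dots> = 1" by (rule det_on_id[OF fin])
  finally show ?thesis .
qed



definition rho :: "int \<Rightarrow> int \<Rightarrow> int set \<Rightarrow> int set" where
  "rho lo t I = (if lo \<in> I then Js t I lo else Js t I t)"

lemma card_Js:
  assumes I: "I \<in> Win lo t" and s: "s \<in> insert t I"
  shows "card (Js t I s) = nat t"
proof -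
  have "card (Js t I s) = card (insert t I - {s})"
    unfolding Js_def by (rule card_image) (auto simp: inj_on_def)
  also have "\<dots> = card I" using s Win_finite[OF I] Win_notin[OF I] by (simp add: card_Diff_singleton)
  also have "\<dots> = nat t" using I unfolding Win_def by auto
  finally show ?thesis .
qed

lemma Tg_Js:
  assumes I: "I \<in> Win lo t" and s0: "s0 \<in> insert t I" and J: "Js t I s0 \<in> Win lo t"
  shows "Tg \<beta> t I (Js t I s0) = eps s0 I * \<beta> s0"
proof -
  have "Tg \<beta> t I (Js t I s0) = (\<Sum>s\<in>insert t I. if s = s0 then eps s I * \<beta> s else 0)"
    unfolding Tg_eq[OF I J] by (rule sum.cong[OF refl]) (use s0 Js_inj[of _ t I s0] in auto)
  also have "\<dots> = eps s0 I * \<beta> s0" using s0 Win_finite[OF I] by (simp add: sum.delta)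
  finally show ?thesis .
qed

lemma Tg_nz_Js:
  assumes I: "I \<in> Win lo t" and K: "K \<in> Win lo t" and nz: "Tg \<beta> t I K \<noteq> 0"
  shows "\<exists>s\<in>insert t I. K = Js t I s"
proof (rule ccontr)
  assume "\<not> ?thesis"
  hence "Tg \<beta> t I K = 0" unfolding Tg_eq[OF I K] by (intro sum.neutral) auto
  thus False using nz by simp
qed

lemma eps_nz: "eps s I \<noteq> (0::'a::field)"
  unfolding eps_def by simp

context
  fixes \<beta> :: "int \<Rightarrow> 'a::field" and lo t :: int
  assumes lo: "lo < 0" and t: "0 \<le> t" and \<beta>lo: "\<beta> lo \<noteq> 0" and \<beta>t: "\<beta> t \<noteq> 0"
begin

lemma rho_Win:
  assumes I: "I \<in> Win lo t"
  shows "rho lo t I \<in> Win lo t"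
proof -
  have Isub: "I \<subseteq> {lo..t-1}" using I unfolding Win_def by auto
  show ?thesis
  proof (cases "lo \<in> I")
    case True
    have "Js t I lo \<subseteq> {lo..t-1}" using Isub lo t unfolding Js_def by auto
    moreover have "card (Js t I lo) = nat t" using card_Js[OF I] True by simp
    ultimately show ?thesis using True unfolding rho_def Win_def by simp
  next
    case False
    have "Js t I t \<subseteq> {lo..t-1}"
    proof
      fix y assume "y \<in> Js t I t"
      then obtain x where x: "x \<in> I" "y = x - 1" using Win_notin[OF I] unfolding Js_def by auto
      have "x \<noteq> lo" using False x by auto
      thus "y \<in> {lo..t-1}" using x Isub by auto
    qed
    moreover have "card (Js t I t) = nat t" using card_Js[OF I] by simp
    ultimately show ?thesis using False unfolding rho_def Win_def by simp
  qed
qed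

lemma rho_Tg:
  assumes I: "I \<in> Win lo t"
  shows "Tg \<beta> t I (rho lo t I) \<noteq> 0"
proof (cases "lo \<in> I")
  case True
  hence "Tg \<beta> t I (rho lo t I) = eps lo I * \<beta> lo"
    using rho_Win[OF I] unfolding rho_def by (simp add: Tg_Js[OF I])
  thus ?thesis using \<beta>lo eps_nz by simp
next
  case False
  hence "Tg \<beta> t I (rho lo t I) = eps t I * \<beta> t"
    using rho_Win[OF I] unfolding rho_def by (simp add: Tg_Js[OF I])
  thus ?thesis using \<beta>t eps_nz by simp
qed

lemma tm1_Js:
  assumes I: "I \<in> Win lo t" and s: "s \<in> insert t I"
  shows "t - 1 \<in> Js t I s \<longleftrightarrow> s \<noteq> t"
proof
  assume h: "t - 1 \<in> Js t I s"
  obtain x where x: "x \<in> insert t I - {s}" "t - 1 = x - 1" using h unfolding Js_def by blast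
  hence "x = t" by simp
  thus "s \<noteq> t" using x by auto
next
  assume "s \<noteq> t"
  hence "t \<in> insert t I - {s}" by auto
  thus "t - 1 \<in> Js t I s" unfolding Js_def by auto
qed

lemma lo_forced:
  assumes I: "I \<in> Win lo t" and loI: "lo \<in> I" and s: "s \<in> insert t I" and J: "Js t I s \<in> Win lo t"
  shows "s = lo"
proof (rule ccontr)
  assume "s \<noteq> lo"
  hence "lo \<in> insert t I - {s}" using loI by auto
  hence "lo - 1 \<in> Js t I s" unfolding Js_def by auto
  thus False using J unfolding Win_def by auto
qed

lemma rho_surj:
  assumes J: "J \<in> Win lo t" and tJ: "t - 1 \<in> J"
  shows "\<exists>I\<in>Win lo t. lo \<in> I \<and> rho lo t I = J"
proof -
  define I where "I = insert lo (shift1 J - {t})"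
  have Jsub: "J \<subseteq> {lo..t-1}" and cJ: "card J = nat t" using J unfolding Win_def by auto
  have finJ: "finite J" using Win_finite[OF J] .
  have sJ: "shift1 J \<subseteq> {lo+1..t}" using Jsub unfolding shift1_def by auto
  have tsJ: "t \<in> shift1 J" unfolding shift1_def by (rule image_eqI[of _ _ "t-1"]) (use tJ in auto)
  have lonot: "lo \<notin> shift1 J - {t}" using sJ by auto
  have fin1: "finite (shift1 J)" using finJ unfolding shift1_def by simp
  have c0: "card (shift1 J) > 0" using fin1 tsJ card_gt_0_iff by blast
  have "card I = Suc (card (shift1 J - {t}))" unfolding I_def using lonot fin1 by simp
  also have "\<dots> = card (shift1 J)" using card_Diff_singleton[OF tsJ] c0 by simp
  also have "\<dots> = nat t" using card_shift1 cJ by simp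
  finally have cI: "card I = nat t" .
  have Isub: "I \<subseteq> {lo..t-1}" using sJ lo t unfolding I_def by auto
  have IW: "I \<in> Win lo t" unfolding Win_def using Isub cI by simp
  have "insert t I - {lo} = shift1 J"
  proof -
    have "insert t I - {lo} = insert t (shift1 J - {t})" proof -
      have tlo: "t \<noteq> lo" using lo t by simp
      show ?thesis unfolding I_def using lonot tlo by blast
    qed
    also have "\<dots> = shift1 J" using tsJ by blast
    finally show ?thesis .
  qed
  hence "Js t I lo = J" using Js_shift1 by metis
  moreover have "lo \<in> I" unfolding I_def by simp
  ultimately show ?thesis using IW unfolding rho_def by auto
qed

lemma rho_inj: "inj_on (rho lo t) (Win lo t)"
proof
  fix I1 I2 assume I1: "I1 \<in> Win lo t" and I2: "I2 \<in> Win lo t" and e: "rho lo t I1 = rho lo t I2"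
  have tlo: "t \<noteq> lo" using lo t by simp
  have c: "t - 1 \<in> rho lo t I \<longleftrightarrow> lo \<in> I" if I: "I \<in> Win lo t" for I
  proof (cases "lo \<in> I")
    case True thus ?thesis using tm1_Js[OF I, of lo] tlo unfolding rho_def by simp
  next
    case False thus ?thesis using tm1_Js[OF I, of t] unfolding rho_def by simp
  qed
  have same: "lo \<in> I1 \<longleftrightarrow> lo \<in> I2" using c[OF I1] c[OF I2] e by simp
  have n1: "t \<notin> I1" and n2: "t \<notin> I2" using Win_notin I1 I2 by auto
  show "I1 = I2"
  proof (cases "lo \<in> I1")
    case True
    hence "Js t I1 lo = Js t I2 lo" using e same unfolding rho_def by simp
    hence h: "insert t I1 - {lo} = insert t I2 - {lo}" using shift1_Js by metis
    have "I1 = insert lo (insert t I1 - {lo} - {t})" using True n1 by auto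
    also have "\<dots> = insert lo (insert t I2 - {lo} - {t})" using h by simp
    also have "\<dots> = I2" using True same n2 by auto
    finally show ?thesis .
  next
    case False
    hence "Js t I1 t = Js t I2 t" using e same unfolding rho_def by simp
    hence h: "insert t I1 - {t} = insert t I2 - {t}" using shift1_Js by metis
    have "I1 = insert t I1 - {t}" using n1 by auto
    also have "\<dots> = insert t I2 - {t}" using h by simp
    also have "\<dots> = I2" using n2 by auto
    finally show ?thesis .
  qed
qed

definition "rhop = (\<lambda>I. if I \<in> Win lo t then rho lo t I else I)"

lemma rhop_permutes: "rhop permutes Win lo t"
proof (rule bij_imp_permutes)
  have img: "rho lo t ` Win lo t = Win lo t"
    by (rule endo_inj_surj[OF finite_Win _ rho_inj]) (use rho_Win in auto)
  have "bij_betw (rho lo t) (Win lo t) (Win lo t)" using img rho_inj by (simp add: bij_betw_def)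
  thus "bij_betw rhop (Win lo t) (Win lo t)" by (rule bij_betw_cong[THEN iffD1, rotated]) (simp add: rhop_def)
qed (simp add: rhop_def)

lemma perm_unique:
  assumes p: "p permutes Win lo t" and nz: "\<forall>I\<in>Win lo t. Tg \<beta> t I (p I) \<noteq> 0"
  shows "p = rhop"
proof -
  have pW: "p I \<in> Win lo t" if "I \<in> Win lo t" for I using p that by (simp add: permutes_in_image)
  have case1: "p I = rho lo t I" if I: "I \<in> Win lo t" and loI: "lo \<in> I" for I
  proof -
    obtain s where s: "s \<in> insert t I" "p I = Js t I s" using Tg_nz_Js[OF I pW[OF I]] nz I by blast
    have "s = lo" by (rule lo_forced[OF I loI s(1)]) (use s pW[OF I] in simp)
    thus ?thesis using s loI unfolding rho_def by simp
  qed
  have case2: "p I = rho lo t I" if I: "I \<in> Win lo t" and loI: "lo \<notin> I" for I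
  proof -
    obtain s where s: "s \<in> insert t I" "p I = Js t I s" using Tg_nz_Js[OF I pW[OF I]] nz I by blast
    have "s = t"
    proof (rule ccontr)
      assume "s \<noteq> t"
      hence "t - 1 \<in> p I" using tm1_Js[OF I s(1)] s by simp
      then obtain I' where I': "I' \<in> Win lo t" "lo \<in> I'" "rho lo t I' = p I"
        using rho_surj[OF pW[OF I]] by blast
      have "p I' = p I" using case1[OF I'(1,2)] I'(3) by simp
      hence "I' = I" using p by (metis permutes_inj injD)
      thus False using I'(2) loI by simp
    qed
    thus ?thesis using s loI unfolding rho_def by simp
  qed
  show ?thesis
  proof
    fix I show "p I = rhop I"
    proof (cases "I \<in> Win lo t")
      case True thus ?thesis using case1[OF True] case2[OF True] unfolding rhop_def by (cases "lo \<in> I") simp_all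
    next
      case False thus ?thesis using p unfolding rhop_def by (simp add: permutes_not_in)
    qed
  qed
qed

lemma det_Tg_nz: "det_on (Win lo t) (Tg \<beta> t) \<noteq> 0"
proof -
  let ?P = "{p. p permutes Win lo t}"
  define g where "g = (\<lambda>p. of_int (sign p) * (\<Prod>I\<in>Win lo t. Tg \<beta> t I (p I)) :: 'a)"
  have "det_on (Win lo t) (Tg \<beta> t) = (\<Sum>p\<in>?P. if p = rhop then g p else 0)"
    unfolding det_on_def g_def
  proof (rule sum.cong[OF refl])
    fix p assume p: "p \<in> ?P"
    show "of_int (sign p) * (\<Prod>I\<in>Win lo t. Tg \<beta> t I (p I)) =
      (if p = rhop then of_int (sign p) * (\<Prod>I\<in>Win lo t. Tg \<beta> t I (p I)) else 0)"
    proof (cases "p = rhop")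
      case False
      hence "\<exists>I\<in>Win lo t. Tg \<beta> t I (p I) = 0" using perm_unique p by blast
      hence "(\<Prod>I\<in>Win lo t. Tg \<beta> t I (p I)) = 0" using finite_Win by (simp add: prod_zero_iff)
      thus ?thesis using False by simp
    qed simp
  qed
  also have "\<dots> = g rhop" using rhop_permutes finite_permutations[OF finite_Win] by (simp add: sum.delta)
  also have "g rhop \<noteq> 0"
  proof -
    have "(\<Prod>I\<in>Win lo t. Tg \<beta> t I (rhop I)) \<noteq> 0"
      using rho_Tg finite_Win by (simp add: prod_zero_iff rhop_def)
    moreover have "(of_int (sign rhop) :: 'a) \<noteq> 0" by (cases rule: sign_cases[of rhop]) auto
    ultimately show ?thesis unfolding g_def by simp
  qed
  finally show ?thesis .
qed

end



lemma adj_Fcof: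
  assumes l: "l \<le> k"
  shows "adj_on {0..k} (IAmat \<omega>) 0 l = Fcof \<omega> k l"
proof -
  define A where "A = mat (Suc k) (Suc k) (\<lambda>(i,j). IAmat \<omega> i j)"
  have X: "{0..k} = {0..<Suc k}" by auto
  have "adj_on {0..k} (IAmat \<omega>) 0 l = cofactor A l 0"
    unfolding X A_def by (rule adj_on_jnf) (use l in auto)
  also have "\<dots> = (-1) ^ l * det (mat_delete A l 0)" unfolding cofactor_def by simp
  also have "mat_delete A l 0 = mat k k (\<lambda>(i,j). IAmat \<omega> (if i < l then i else Suc i) (Suc j))"
    by (rule eq_matI) (auto simp: mat_delete_def A_def)
  also have "(-1) ^ l * det \<dots> = Fcof \<omega> k l" unfolding Fcof_def det_on_jnf ..
  finally show ?thesis .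
qed

lemma inv_claim:
  fixes \<omega> :: "int \<Rightarrow> 'a::field"
  assumes nz: "Fdet \<omega> (Suc k) \<noteq> 0"
  shows "(\<Sum>l = 0..k. inv_on {0..k} (IAmat \<omega>) 0 l) = Gseq \<omega> k / Fdet \<omega> (Suc k)"
proof -
  define X where "X = {0..k}"
  define M where "M = IAmat \<omega>"
  define d where "d = det_on X M"
  have dF: "d = Fdet \<omega> (Suc k)" unfolding d_def X_def M_def Fdet_def by simp
  have dnz: "d \<noteq> 0" using nz dF by simp
  have finX: "finite X" unfolding X_def by simp
  define B0 where "B0 = (\<lambda>i j. adj_on X M i j / d)"
  have P1: "(\<Sum>m\<in>X. M i m * B0 m j) = (if i = j then 1 else 0)" if "i \<in> X" "j \<in> X" for i j
  proof -
    have "(\<Sum>m\<in>X. M i m * B0 m j) = (\<Sum>m\<in>X. M i m * adj_on X M m j) / d"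
      unfolding B0_def by (simp add: sum_divide_distrib)
    thus ?thesis using adj_on_identities(1)[where M = M, OF finX that] dnz unfolding d_def by simp
  qed
  have P2: "(\<Sum>m\<in>X. B0 i m * M m j) = (if i = j then 1 else 0)" if "i \<in> X" "j \<in> X" for i j
  proof -
    have "(\<Sum>m\<in>X. B0 i m * M m j) = (\<Sum>m\<in>X. adj_on X M i m * M m j) / d"
      unfolding B0_def by (simp add: sum_divide_distrib)
    thus ?thesis using adj_on_identities(2)[where M = M, OF finX that] dnz unfolding d_def by simp
  qed
  define B where "B = inv_on X M"
  have Bp: "(\<forall>i\<in>X. \<forall>j\<in>X. (\<Sum>m\<in>X. M i m * B m j) = (if i = j then 1 else 0)) \<and>
            (\<forall>i\<in>X. \<forall>j\<in>X. (\<Sum>m\<in>X. B i m * M m j) = (if i = j then 1 else 0))"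
    unfolding B_def inv_on_def by (rule someI[of _ B0]) (use P1 P2 in auto)
  have BB0: "B i j = B0 i j" if i: "i \<in> X" and j: "j \<in> X" for i j
  proof -
    have "B i j = (\<Sum>m\<in>X. B i m * (if m = j then 1 else 0))"
      using finX j by (simp add: if_distrib[of "\<lambda>x. _ * x"] sum.delta' cong: if_cong)
    also have "\<dots> = (\<Sum>m\<in>X. B i m * (\<Sum>n\<in>X. M m n * B0 n j))"
      by (rule sum.cong[OF refl]) (simp add: P1 j)
    also have "\<dots> = (\<Sum>m\<in>X. \<Sum>n\<in>X. B i m * M m n * B0 n j)"
      by (simp add: sum_distrib_left mult.assoc)
    also have "\<dots> = (\<Sum>n\<in>X. \<Sum>m\<in>X. B i m * M m n * B0 n j)" by (rule sum.swap)
    also have "\<dots> = (\<Sum>n\<in>X. (\<Sum>m\<in>X. B i m * M m n) * B0 n j)" by (simp add: sum_distrib_right)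
    also have "\<dots> = (\<Sum>n\<in>X. (if i = n then 1 else 0) * B0 n j)"
      by (rule sum.cong[OF refl]) (use Bp i in simp)
    also have "\<dots> = B0 i j" using finX i by (simp add: if_distrib[of "\<lambda>x. x * _"] sum.delta cong: if_cong)
    finally show ?thesis .
  qed
  have "(\<Sum>l = 0..k. inv_on {0..k} (IAmat \<omega>) 0 l) = (\<Sum>l = 0..k. Fcof \<omega> k l / d)"
  proof (rule sum.cong[OF refl])
    fix l assume l: "l \<in> {0..k}"
    have "inv_on {0..k} (IAmat \<omega>) 0 l = B0 0 l" using BB0[of 0 l] l unfolding B_def X_def M_def by simp
    also have "\<dots> = Fcof \<omega> k l / d" unfolding B0_def X_def M_def using adj_Fcof[of l k \<omega>] l by simp
    finally show "inv_on {0..k} (IAmat \<omega>) 0 l = Fcof \<omega> k l / d" .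
  qed
  also have "\<dots> = Gseq \<omega> k / Fdet \<omega> (Suc k)" unfolding Gseq_def dF by (simp add: sum_divide_distrib)
  finally show ?thesis .
qed



theorem mainTheorem10:
  fixes S :: "int set" and \<omega> :: "int \<Rightarrow> 'a::field_char_0"
    and a b :: int
  defines "a \<equiv> Max S" and "b \<equiv> - Min S"
  assumes "finite S" and "S \<noteq> {}" and "a \<ge> 1" and "b \<ge> 1"
    and "\<forall>s. s \<notin> S \<longrightarrow> \<omega> s = 0"
    and "\<omega> a \<noteq> 0" and "\<omega> (- b) \<noteq> 0"
  shows "Abs_fps (Gseq \<omega>) =
           fps_of_poly (Nt1poly \<omega> a b) / fps_of_poly (Dtpoly \<omega> a b * Dpoly \<omega> a b)
       \<and> coeff (Dtpoly \<omega> a b * Dpoly \<omega> a b) 0 = 1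
       \<and> degree (Dtpoly \<omega> a b * Dpoly \<omega> a b) = nat (a + b + 1) choose nat a
       \<and> (\<exists>c :: nat \<Rightarrow> 'a. c 0 = 1 \<and> c (nat (a + b + 1) choose nat a) \<noteq> 0 \<and>
            (\<exists>n0. \<forall>n\<ge>n0. (\<Sum>i\<le>nat (a + b + 1) choose nat a. c i * Gseq \<omega> (n - i)) = 0))
       \<and> (\<forall>k. Fdet \<omega> (Suc k) \<noteq> 0 \<longrightarrow>
            (\<Sum>l = 0..k. inv_on {0..k} (IAmat \<omega>) 0 l) = Gseq \<omega> k / Fdet \<omega> (Suc k))"
proof -
  note fS = assms(3) and neS = assms(4) and a1 = assms(5) and b1 = assms(6)
    and \<omega>S = assms(7) and \<omega>a = assms(8) and \<omega>b = assms(9)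
  have \<omega>0: "\<omega> s = 0" if "s < -b \<or> a < s" for s
  proof -
    have "s \<notin> S"
    proof
      assume s: "s \<in> S"
      have "s \<le> a" unfolding a_def using Max_ge[OF fS s] .
      moreover have "-b \<le> s" unfolding b_def using Min_le[OF fS s] by simp
      ultimately show False using that by simp
    qed
    thus ?thesis using \<omega>S by simp
  qed
  define W where "W = Win (-b) a"
  define Wt where "Wt = Win (-b-1) (a-1)"
  define T where "T = Tg (betaw \<omega>) a"
  define Tt where "Tt = Tg (betat \<omega>) (a-1)"
  define D where "D = Dpoly \<omega> a b"
  define Dt where "Dt = Dtpoly \<omega> a b"
  define N where "N = Nt1poly \<omega> a b"
  define P where "P = Dt * D"
  have eD: "D = det_on W (zM T)" unfolding D_def Dpoly_def W_def T_def idxT_Win zTmat_zM ..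
  have eDt: "Dt = det_on Wt (zM Tt)" unfolding Dt_def Dtpoly_def Wt_def Tt_def idxTt_Win zTtmat_zM ..
  have cD: "coeff D 0 = 1" unfolding eD by (rule coeff0_det_zM) (simp add: W_def finite_Win)
  have cDt: "coeff Dt 0 = 1" unfolding eDt by (rule coeff0_det_zM) (simp add: Wt_def finite_Win)
  have cP: "coeff P 0 = 1" unfolding P_def coeff_mult_0 cD cDt by simp
  have Dnz: "D \<noteq> 0" using cD by auto
  have Dtnz: "Dt \<noteq> 0" using cDt by auto
  have Pnz: "P \<noteq> 0" using cP by auto
  have detT: "det_on W T \<noteq> 0"
    unfolding W_def T_def
    by (rule det_Tg_nz) (use a1 b1 \<omega>a \<omega>b in \<open>auto simp: betaw_def\<close>)
  have detTt: "det_on Wt Tt \<noteq> 0"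
    unfolding Wt_def Tt_def
    by (rule det_Tg_nz) (use a1 b1 \<omega>a \<omega>b in \<open>auto simp: betat_def betaw_def\<close>)
  have degD: "degree D = card W"
  proof -
    have h: "degree D \<le> card W \<and> coeff D (card W) = (-1) ^ card W * det_on W T"
      unfolding eD by (rule det_zM) (simp add: W_def finite_Win)
    hence "coeff D (card W) \<noteq> 0" using detT by simp
    thus ?thesis using h le_degree by (meson antisym)
  qed
  have degDt: "degree Dt = card Wt"
  proof -
    have h: "degree Dt \<le> card Wt \<and> coeff Dt (card Wt) = (-1) ^ card Wt * det_on Wt Tt"
      unfolding eDt by (rule det_zM) (simp add: Wt_def finite_Win)
    hence "coeff Dt (card Wt) \<noteq> 0" using detTt by simp
    thus ?thesis using h le_degree by (meson antisym)
  qed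
  have cW: "card W = nat (a + b) choose nat a"
  proof -
    have "card W = card {-b..a-1} choose nat a" unfolding W_def Win_def by (rule n_subsets) simp
    also have "card {-b..a-1} = nat (a + b)" by simp
    finally show ?thesis .
  qed
  have cWt: "card Wt = nat (a + b) choose nat (a - 1)"
  proof -
    have "card Wt = card {-b-1..a-1-1} choose nat (a-1)" unfolding Wt_def Win_def by (rule n_subsets) simp
    also have "card {-b-1..a-1-1} = nat (a + b)" by simp
    finally show ?thesis .
  qed
  have degP: "degree P = nat (a + b + 1) choose nat a"
  proof -
    have e1: "nat (a + b + 1) = Suc (nat (a + b))" using a1 b1 by simp
    have e2: "nat a = Suc (nat (a - 1))" using a1 by simp
    have "degree P = card Wt + card W" unfolding P_def degree_mult_eq[OF Dtnz Dnz] degD degDt ..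
    also have "\<dots> = nat (a + b + 1) choose nat a" unfolding cW cWt e1 e2 by simp
    finally show ?thesis .
  qed
  have gf: "Abs_fps (Gseq \<omega>) * fps_of_poly P = fps_of_poly N"
    unfolding P_def Dt_def D_def N_def by (rule gf_main[OF a1 b1 \<omega>0]) auto
  have P0: "fps_nth (fps_of_poly P) 0 \<noteq> 0" using cP by simp
  have div: "Abs_fps (Gseq \<omega>) = fps_of_poly N / fps_of_poly P"
  proof -
    have "fps_of_poly N / fps_of_poly P = fps_of_poly N * inverse (fps_of_poly P)"
      by (rule fps_divide_unit[OF P0])
    also have "\<dots> = Abs_fps (Gseq \<omega>) * (fps_of_poly P * inverse (fps_of_poly P))"
      unfolding gf[symmetric] by (simp add: mult.assoc)
    also have "\<dots> = Abs_fps (Gseq \<omega>)" using inverse_mult_eq_1'[OF P0] by simp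
    finally show ?thesis by simp
  qed
  have rec: "\<exists>c :: nat \<Rightarrow> 'a. c 0 = 1 \<and> c (nat (a + b + 1) choose nat a) \<noteq> 0 \<and>
            (\<exists>n0. \<forall>n\<ge>n0. (\<Sum>i\<le>nat (a + b + 1) choose nat a. c i * Gseq \<omega> (n - i)) = 0)"
  proof (intro exI conjI)
    show "coeff P 0 = 1" by (rule cP)
    show "coeff P (nat (a + b + 1) choose nat a) \<noteq> 0" using Pnz degP[symmetric] by simp
    show "\<forall>n\<ge>degree P + degree N + 1. (\<Sum>i\<le>nat (a + b + 1) choose nat a. coeff P i * Gseq \<omega> (n - i)) = 0"
    proof (intro allI impI)
      fix n assume n: "degree P + degree N + 1 \<le> n"
      have "(\<Sum>i\<le>nat (a + b + 1) choose nat a. coeff P i * Gseq \<omega> (n - i)) =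
          (\<Sum>i=0..n. coeff P i * Gseq \<omega> (n - i))"
        unfolding degP[symmetric]
      proof (rule sum.mono_neutral_left)
        show "{..degree P} \<subseteq> {0..n}" using n by auto
        show "\<forall>i\<in>{0..n} - {..degree P}. coeff P i * Gseq \<omega> (n - i) = 0"
          by (auto simp: coeff_eq_0)
      qed simp
      also have "\<dots> = fps_nth (fps_of_poly P * Abs_fps (Gseq \<omega>)) n" by (simp add: fps_mult_nth)
      also have "\<dots> = coeff N n" using gf by (simp add: mult.commute)
      also have "\<dots> = 0" using n by (simp add: coeff_eq_0)
      finally show "(\<Sum>i\<le>nat (a + b + 1) choose nat a. coeff P i * Gseq \<omega> (n - i)) = 0" .
    qed
  qed
  show ?thesis
    using div cP degP rec inv_claim unfolding P_def Dt_def D_def N_def by blast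
qed

end
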